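(* Fix a positive integer $m$ and let $n\to\infty$. Then \[\mathcal{C}_{m,n}^+ = (1+o(1))\, H_m \log n,\] where $H_m=\sum_{j=1}^{m} j^{-1}$ is the $m$-th harmonic number, and \[\mathcal{C}_{m,n}^-=\Theta(n^{-1/m}),\] where the implicit constants may depend on $m$.
   Context: Let $\mathcal{S}_{m,n}$ be the set of words over the alphabet $[n]=\{1,\dots,n\}$ in which each symbol appears exactly $m$ times (a deck of $mn$ cards, $m$ copies of each of $n$ card types). A deck order $\pi\sim\mathcal{S}_{m,n}$ is chosen uniformly at random. In the complete feedback model a guesser guesses $\pi_1,\pi_2,\dots,\pi_{mn}$ one at a time; before guessing $\pi_t$ the guesser knows the true values $\pi_1,\dots,\pi_{t-1}$. For a guessing strategy $\mathcal{G}$, let $C(\mathcal{G},\pi)$ be the number of correct guesses. Define $\mathcal{C}^+_{m,n}=\max_{\mathcal{G}}\mathbb{E}[C(\mathcal{G},\pi)]$ and $\mathcal{C}^-_{m,n}=\min_{\mathcal{G}}\mathbb{E}[C(\mathcal{G},\pi)]$ over all strategies. $\log$ is the natural logarithm. *)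

theory Defs
  imports "HOL-Analysis.Analysis" "HOL-Library.Landau_Symbols"
begin

definition decks :: "nat \<Rightarrow> nat \<Rightarrow> nat list set" where
  "decks m n = {w. length w = m * n \<and> set w \<subseteq> {1..n} \<and>
                   (\<forall>i\<in>{1..n}. count (mset w) i = m)}"

text \<open>A (deterministic) guessing strategy in the complete feedback model: given the
  already revealed prefix, it guesses a card type in {1..n}.\<close>
definition strategy :: "nat \<Rightarrow> (nat list \<Rightarrow> nat) \<Rightarrow> bool" where
  "strategy n G \<longleftrightarrow> (\<forall>xs. G xs \<in> {1..n})"

definition correct :: "(nat list \<Rightarrow> nat) \<Rightarrow> nat list \<Rightarrow> nat" where
  "correct G w = card {t. t < length w \<and> G (take t w) = w ! t}"

definition expected_correct :: "nat \<Rightarrow> nat \<Rightarrow> (nat list \<Rightarrow> nat) \<Rightarrow> real" where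
  "expected_correct m n G =
     (\<Sum>w\<in>decks m n. real (correct G w)) / real (card (decks m n))"

definition Cplus :: "nat \<Rightarrow> nat \<Rightarrow> real" where
  "Cplus m n = (SUP G\<in>{G. strategy n G}. expected_correct m n G)"

definition Cminus :: "nat \<Rightarrow> nat \<Rightarrow> real" where
  "Cminus m n = (INF G\<in>{G. strategy n G}. expected_correct m n G)"

end

theory Submission
  imports Defs
begin

definition cnt :: "nat list \<Rightarrow> nat set \<Rightarrow> nat \<Rightarrow> nat" where
  "cnt w S i = card {p\<in>S. w ! p = i}"

definition psi :: "(nat \<Rightarrow> nat) \<Rightarrow> nat \<Rightarrow> nat list \<Rightarrow> nat list" where
  "psi \<sigma> N w = map (\<lambda>k. w ! \<sigma> k) [0..<N]"

lemma decks_mem: "w \<in> decks m n \<longleftrightarrow> length w = m*n \<and> set w \<subseteq> {1..n} \<and> (\<forall>i\<in>{1..n}. count (mset w) i = m)"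
  by (simp add: decks_def)

lemma finite_decks: "finite (decks m n)"
  by (rule finite_subset[OF _ finite_lists_length_eq[of "{1..n}" "m*n"]]) (auto simp: decks_def)

lemma decks_mset: "w \<in> decks m n \<Longrightarrow> mset v = mset w \<Longrightarrow> v \<in> decks m n"
proof -
  assume a: "w \<in> decks m n" "mset v = mset w"
  then have "length v = length w" "set v = set w" using mset_eq_length mset_eq_setD by blast+
  then show ?thesis using a by (simp add: decks_def)
qed

fun wit :: "nat \<Rightarrow> nat \<Rightarrow> nat list" where
  "wit m 0 = []" | "wit m (Suc n) = wit m n @ replicate m (Suc n)"

lemma wit_in: "wit m n \<in> decks m n"
proof (induction n)
  case 0
  then show ?case by (simp add: decks_def)
next
  case (Suc n)
  then have a: "length (wit m n) = m*n" "set (wit m n) \<subseteq> {1..n}" "\<forall>i\<in>{1..n}. count (mset (wit m n)) i = m"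
    by (auto simp: decks_def)
  have "count (mset (wit m n)) (Suc n) = 0" using a(2) by (auto simp: count_eq_zero_iff)
  then show ?case using a by (auto simp: decks_def)
qed

lemma decks_nonempty: "card (decks m n) > 0"
  using wit_in finite_decks by (metis card_gt_0_iff empty_iff)

lemma cnt_full:
  assumes "w \<in> decks m n" "i \<in> {1..n}"
  shows "cnt w {0..<m*n} i = m"
proof -
  have "count (mset w) i = m" using assms by (simp add: decks_def)
  moreover have "count (mset w) i = card {p. p < length w \<and> i = w ! p}"
    by (simp add: count_mset count_list_eq_length_filter length_filter_conv_card)
  moreover have "{p. p < length w \<and> i = w ! p} = {p\<in>{0..<m*n}. w ! p = i}"
    using assms by (auto simp: decks_def)
  ultimately show ?thesis by (simp add: cnt_def)
qed

lemma psi_nth: "k < N \<Longrightarrow> psi \<sigma> N w ! k = w ! \<sigma> k"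
  by (simp add: psi_def)

lemma length_psi [simp]: "length (psi \<sigma> N w) = N"
  by (simp add: psi_def)

lemma mset_psi:
  assumes "bij_betw \<sigma> {0..<length w} {0..<length w}"
  shows "mset (psi \<sigma> (length w) w) = mset w"
proof -
  have "mset (psi \<sigma> (length w) w) = image_mset (\<lambda>k. w ! \<sigma> k) (mset_set {0..<length w})"
    by (simp add: psi_def)
  also have "\<dots> = image_mset (nth w) (image_mset \<sigma> (mset_set {0..<length w}))"
    by (simp add: multiset.map_comp o_def)
  also have "image_mset \<sigma> (mset_set {0..<length w}) = mset_set {0..<length w}"
    using assms by (simp add: image_mset_mset_set bij_betw_def)
  also have "image_mset (nth w) (mset_set {0..<length w}) = mset w"
    by (metis map_nth mset_map mset_upt)
  finally show ?thesis .
qed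

lemma psi_decks:
  assumes "bij_betw \<sigma> {0..<m*n} {0..<m*n}" "w \<in> decks m n"
  shows "psi \<sigma> (m*n) w \<in> decks m n"
proof -
  have "length w = m*n" using assms by (simp add: decks_def)
  then show ?thesis using mset_psi[of \<sigma> w] assms decks_mset by metis
qed

lemma psi_inj:
  assumes "{0..<N} \<subseteq> \<sigma> ` {0..<N}"
  shows "inj_on (psi \<sigma> N) {w. length w = N}"
proof (rule inj_onI)
  fix w v assume w: "w \<in> {w. length w = N}" and v: "v \<in> {w. length w = N}"
    and e: "psi \<sigma> N w = psi \<sigma> N v"
  show "w = v"
  proof (rule nth_equalityI)
    show "length w = length v" using w v by simp
    fix q assume "q < length w"
    then obtain k where k: "k < N" "q = \<sigma> k" using w assms by auto
    have "psi \<sigma> N w ! k = psi \<sigma> N v ! k" using e by simp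
    then show "w ! q = v ! q" using k by (simp add: psi_nth)
  qed
qed

lemma perm_exists:
  assumes U: "finite U" and s: "A \<subseteq> U" "B \<subseteq> U" "A \<inter> B = {}" "A' \<subseteq> U" "B' \<subseteq> U" "A' \<inter> B' = {}"
    and c: "card A' = card A" "card B' = card B"
  shows "\<exists>\<sigma>. bij_betw \<sigma> U U \<and> \<sigma> ` A' = A \<and> \<sigma> ` B' = B"
proof -
  have fin: "finite A" "finite B" "finite A'" "finite B'" using s U finite_subset by metis+
  obtain f where f: "bij_betw f A' A" using finite_same_card_bij fin c by metis
  obtain g where g: "bij_betw g B' B" using finite_same_card_bij fin c by metis
  have "card (U - (A' \<union> B')) = card U - (card A' + card B')"
    using s fin U by (simp add: card_Diff_subset card_Un_disjoint)
  moreover have "card (U - (A \<union> B)) = card U - (card A + card B)"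
    using s fin U by (simp add: card_Diff_subset card_Un_disjoint)
  ultimately have "card (U - (A' \<union> B')) = card (U - (A \<union> B))" using c by simp
  then obtain h where h: "bij_betw h (U - (A' \<union> B')) (U - (A \<union> B))"
    using finite_same_card_bij U by (metis finite_Diff)
  define \<sigma> where "\<sigma> x = (if x \<in> A' then f x else if x \<in> B' then g x else h x)" for x
  have 1: "bij_betw \<sigma> A' A" using f by (subst bij_betw_cong[of A' \<sigma> f]) (auto simp: \<sigma>_def)
  have 2: "bij_betw \<sigma> B' B" using g s by (subst bij_betw_cong[of B' \<sigma> g]) (auto simp: \<sigma>_def)
  have 3: "bij_betw \<sigma> (U - (A' \<union> B')) (U - (A \<union> B))" using h by (subst bij_betw_cong[of _ \<sigma> h]) (auto simp: \<sigma>_def)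
  have "bij_betw \<sigma> (A' \<union> B' \<union> (U - (A' \<union> B'))) (A \<union> B \<union> (U - (A \<union> B)))"
    by (intro bij_betw_combine 1 2 3) (use s in auto)
  moreover have "A' \<union> B' \<union> (U - (A' \<union> B')) = U" "A \<union> B \<union> (U - (A \<union> B)) = U" using s by auto
  ultimately have "bij_betw \<sigma> U U" by simp
  moreover have "\<sigma> ` A' = A" using 1 by (simp add: bij_betw_def)
  moreover have "\<sigma> ` B' = B" using 2 by (simp add: bij_betw_def)
  ultimately show ?thesis by blast
qed

definition Q :: "nat set \<Rightarrow> nat set \<Rightarrow> nat \<Rightarrow> nat \<Rightarrow> nat list \<Rightarrow> bool" where
  "Q A B i i' w \<longleftrightarrow> (\<forall>p\<in>A. w ! p = i) \<and> (\<forall>p\<in>B. w ! p = i')"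

definition Pairs :: "nat set \<Rightarrow> nat \<Rightarrow> nat \<Rightarrow> (nat set \<times> nat set) set" where
  "Pairs S a b = {(A,B). A \<subseteq> S \<and> B \<subseteq> S \<and> card A = a \<and> card B = b \<and> A \<inter> B = {}}"

lemma exch_le:
  assumes bij: "bij_betw \<sigma> {0..<m*n} {0..<m*n}" and im: "\<sigma> ` A' = A" "\<sigma> ` B' = B"
    and sub: "A' \<subseteq> {0..<m*n}" "B' \<subseteq> {0..<m*n}"
  shows "card {w\<in>decks m n. Q A B i i' w} \<le> card {w\<in>decks m n. Q A' B' i i' w}"
proof (rule card_inj_on_le)
  show "inj_on (psi \<sigma> (m*n)) {w\<in>decks m n. Q A B i i' w}"
    by (rule inj_on_subset[OF psi_inj]) (use bij in \<open>auto simp: bij_betw_def decks_def\<close>)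
  show "psi \<sigma> (m*n) ` {w\<in>decks m n. Q A B i i' w} \<subseteq> {w\<in>decks m n. Q A' B' i i' w}"
  proof safe
    fix w assume w: "w \<in> decks m n" "Q A B i i' w"
    show "psi \<sigma> (m*n) w \<in> decks m n" using psi_decks bij w by blast
    show "Q A' B' i i' (psi \<sigma> (m*n) w)"
      using w(2) im sub unfolding Q_def by (auto simp: psi_nth)
  qed
  show "finite {w\<in>decks m n. Q A' B' i i' w}" using finite_decks by simp
qed

lemma exch_eq:
  assumes "(A,B) \<in> Pairs {0..<m*n} a b" "(A',B') \<in> Pairs {0..<m*n} a b"
  shows "card {w\<in>decks m n. Q A B i i' w} = card {w\<in>decks m n. Q A' B' i i' w}"
proof (rule antisym)
  have s: "A \<subseteq> {0..<m*n}" "B \<subseteq> {0..<m*n}" "A \<inter> B = {}" "A' \<subseteq> {0..<m*n}" "B' \<subseteq> {0..<m*n}" "A' \<inter> B' = {}"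
    "card A' = card A" "card B' = card B"
    using assms by (auto simp: Pairs_def)
  obtain \<sigma> where \<sigma>: "bij_betw \<sigma> {0..<m*n} {0..<m*n}" "\<sigma> ` A' = A" "\<sigma> ` B' = B"
    using perm_exists[OF finite_atLeastLessThan s(1-8)] by blast
  show "card {w\<in>decks m n. Q A B i i' w} \<le> card {w\<in>decks m n. Q A' B' i i' w}"
    by (rule exch_le[OF \<sigma> s(4) s(5)])
  obtain \<tau> where \<tau>: "bij_betw \<tau> {0..<m*n} {0..<m*n}" "\<tau> ` A = A'" "\<tau> ` B = B'"
    using perm_exists[OF finite_atLeastLessThan s(4-6) s(1-3) s(7)[symmetric] s(8)[symmetric]] by blast
  show "card {w\<in>decks m n. Q A' B' i i' w} \<le> card {w\<in>decks m n. Q A B i i' w}"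
    by (rule exch_le[OF \<tau> s(1) s(2)])
qed

lemma card_Pairs:
  assumes "finite S"
  shows "card (Pairs S a b) = (card S choose a) * ((card S - a) choose b)"
proof -
  have "Pairs S a b = Sigma {A. A \<subseteq> S \<and> card A = a} (\<lambda>A. {B. B \<subseteq> S - A \<and> card B = b})"
    by (auto simp: Pairs_def)
  moreover have "card (Sigma {A. A \<subseteq> S \<and> card A = a} (\<lambda>A. {B. B \<subseteq> S - A \<and> card B = b}))
     = (\<Sum>A\<in>{A. A \<subseteq> S \<and> card A = a}. card {B. B \<subseteq> S - A \<and> card B = b})"
    by (rule card_SigmaI) (use assms in auto)
  moreover have "(\<Sum>A\<in>{A. A \<subseteq> S \<and> card A = a}. card {B. B \<subseteq> S - A \<and> card B = b})
     = (\<Sum>A\<in>{A. A \<subseteq> S \<and> card A = a}. (card S - a) choose b)"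
  proof (rule sum.cong)
    fix A assume "A \<in> {A. A \<subseteq> S \<and> card A = a}"
    then show "card {B. B \<subseteq> S - A \<and> card B = b} = (card S - a) choose b"
      using assms n_subsets[of "S - A" b] finite_subset[of A S] by (simp add: card_Diff_subset)
  qed simp
  ultimately show ?thesis using n_subsets[OF assms] by simp
qed

lemma card_Qpairs:
  assumes "finite S" "i \<noteq> i' \<or> b = 0"
  shows "card {AB\<in>Pairs S a b. Q (fst AB) (snd AB) i i' w} = (cnt w S i choose a) * (cnt w S i' choose b)"
proof -
  have "{AB\<in>Pairs S a b. Q (fst AB) (snd AB) i i' w} =
      {A. A \<subseteq> {p\<in>S. w ! p = i} \<and> card A = a} \<times> {B. B \<subseteq> {p\<in>S. w ! p = i'} \<and> card B = b}"
  proof (intro equalityI subsetI)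
    fix AB assume "AB \<in> {AB\<in>Pairs S a b. Q (fst AB) (snd AB) i i' w}"
    then show "AB \<in> {A. A \<subseteq> {p\<in>S. w ! p = i} \<and> card A = a} \<times> {B. B \<subseteq> {p\<in>S. w ! p = i'} \<and> card B = b}"
      by (auto simp: Pairs_def Q_def)
  next
    fix AB assume a: "AB \<in> {A. A \<subseteq> {p\<in>S. w ! p = i} \<and> card A = a} \<times> {B. B \<subseteq> {p\<in>S. w ! p = i'} \<and> card B = b}"
    obtain A B where AB: "AB = (A,B)" by force
    have "B \<subseteq> S" using a AB by auto
    then have "finite B" using assms(1) finite_subset by auto
    then have "A \<inter> B = {}" using a AB assms(2) by auto
    then show "AB \<in> {AB\<in>Pairs S a b. Q (fst AB) (snd AB) i i' w}"
      using a AB by (auto simp: Pairs_def Q_def)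
  qed
  then show ?thesis using assms(1)
    by (simp add: card_cartesian_product n_subsets cnt_def)
qed

lemma double_count:
  assumes "finite X" "finite Y"
  shows "(\<Sum>x\<in>X. card {y\<in>Y. R x y}) = (\<Sum>y\<in>Y. card {x\<in>X. R x y})"
proof -
  have "(\<Sum>x\<in>X. card {y\<in>Y. R x y}) = (\<Sum>x\<in>X. \<Sum>y\<in>Y. if R x y then 1 else 0)"
    using assms by (simp add: sum.If_cases Int_def)
  also have "\<dots> = (\<Sum>y\<in>Y. \<Sum>x\<in>X. if R x y then 1 else 0)" by (rule sum.swap)
  also have "\<dots> = (\<Sum>y\<in>Y. card {x\<in>X. R x y})"
    using assms by (simp add: sum.If_cases Int_def)
  finally show ?thesis .
qed

lemma main_count:
  assumes S: "S \<subseteq> {0..<m*n}" and ii: "i \<noteq> i' \<or> b = 0" and i: "i \<in> {1..n}" "i' \<in> {1..n}"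
  shows "(\<Sum>w\<in>decks m n. (cnt w S i choose a) * (cnt w S i' choose b)) * ((m*n choose a) * ((m*n - a) choose b))
       = card (decks m n) * (m choose a) * (m choose b) * ((card S choose a) * ((card S - a) choose b))"
proof -
  let ?D = "decks m n" and ?P = "Pairs {0..<m*n} a b" and ?PS = "Pairs S a b"
  have finS: "finite S" using S finite_subset by blast
  have finP: "finite ?P" unfolding Pairs_def
    by (rule finite_subset[of _ "Pow {0..<m*n} \<times> Pow {0..<m*n}"]) auto
  have PS: "?PS \<subseteq> ?P" using S by (auto simp: Pairs_def)
  have finPS: "finite ?PS" using finite_subset[OF PS finP] .
  have lhsS: "(\<Sum>w\<in>?D. (cnt w S i choose a) * (cnt w S i' choose b))
     = (\<Sum>AB\<in>?PS. card {w\<in>?D. Q (fst AB) (snd AB) i i' w})"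
    using card_Qpairs[OF finS ii] double_count[OF finite_decks finPS, of "\<lambda>w AB. Q (fst AB) (snd AB) i i' w" m n]
    by simp
  show ?thesis
  proof (cases "?PS = {}")
    case True
    then have "card ?PS = 0" by simp
    then have z: "(card S choose a) * ((card S - a) choose b) = 0" using card_Pairs[OF finS] by simp
    have "(\<Sum>w\<in>?D. (cnt w S i choose a) * (cnt w S i' choose b)) = 0" using lhsS True by simp
    then show ?thesis using z by simp
  next
    case False
    then obtain A0 B0 where AB0: "(A0,B0) \<in> ?PS" by auto
    define c where "c = card {w\<in>?D. Q A0 B0 i i' w}"
    have const: "card {w\<in>?D. Q (fst AB) (snd AB) i i' w} = c" if "AB \<in> ?P" for AB
      using exch_eq[of "fst AB" "snd AB" m n a b A0 B0] that AB0 PS by (auto simp: c_def)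
    have "(\<Sum>w\<in>?D. card {AB\<in>?P. Q (fst AB) (snd AB) i i' w}) = (\<Sum>AB\<in>?P. card {w\<in>?D. Q (fst AB) (snd AB) i i' w})"
      using double_count[OF finite_decks finP] by simp
    also have "\<dots> = card ?P * c" using const by simp
    finally have e1: "(\<Sum>w\<in>?D. card {AB\<in>?P. Q (fst AB) (snd AB) i i' w}) = card ?P * c" .
    have "(\<Sum>w\<in>?D. card {AB\<in>?P. Q (fst AB) (snd AB) i i' w}) = (\<Sum>w\<in>?D. (m choose a) * (m choose b))"
      using card_Qpairs[of "{0..<m*n}" i i' b a] ii cnt_full i by simp
    then have e2: "card ?P * c = card ?D * (m choose a) * (m choose b)" using e1 by simp
    have "(\<Sum>AB\<in>?PS. card {w\<in>?D. Q (fst AB) (snd AB) i i' w}) = card ?PS * c"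
    proof -
      have "(\<Sum>AB\<in>?PS. card {w\<in>?D. Q (fst AB) (snd AB) i i' w}) = (\<Sum>AB\<in>?PS. c)"
        using const PS by (intro sum.cong) auto
      then show ?thesis by simp
    qed
    then have h: "(\<Sum>w\<in>?D. (cnt w S i choose a) * (cnt w S i' choose b)) * card ?P = card ?PS * (card ?P * c)"
      using lhsS by simp
    have "(\<Sum>w\<in>?D. (cnt w S i choose a) * (cnt w S i' choose b)) * card ?P
        = card ?PS * (card ?D * (m choose a) * (m choose b))"
      using h e2 by (simp only:)
    then show ?thesis
      unfolding card_Pairs[OF finS] card_Pairs[OF finite_atLeastLessThan] card_atLeastLessThan diff_zero
      by (simp only: ac_simps)
  qed
qed

lemma swap_bij:
  fixes t p N :: nat
  assumes "t < N" "p < N"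
  shows "bij_betw (\<lambda>k. if k = t then p else if k = p then t else k) {0..<N} {0..<N}"
  unfolding bij_betw_def
proof
  show "inj_on (\<lambda>k. if k = t then p else if k = p then t else k) {0..<N}"
    by (auto simp: inj_on_def)
  show "(\<lambda>k. if k = t then p else if k = p then t else k) ` {0..<N} = {0..<N}"
  proof
    show "(\<lambda>k. if k = t then p else if k = p then t else k) ` {0..<N} \<subseteq> {0..<N}" using assms by auto
    show "{0..<N} \<subseteq> (\<lambda>k. if k = t then p else if k = p then t else k) ` {0..<N}"
    proof
      fix x assume x: "x \<in> {0..<N}"
      have "x = (\<lambda>k. if k = t then p else if k = p then t else k) ((\<lambda>k. if k = t then p else if k = p then t else k) x)"
        by auto
      moreover have "(\<lambda>k. if k = t then p else if k = p then t else k) x \<in> {0..<N}" using x assms by auto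
      ultimately show "x \<in> (\<lambda>k. if k = t then p else if k = p then t else k) ` {0..<N}" by blast
    qed
  qed
qed

lemma swap_card_le:
  assumes tp: "t \<le> p" "p < m*n"
  shows "card {w\<in>decks m n. g (take t w) = w ! t} \<le> card {w\<in>decks m n. g (take t w) = w ! p}"
proof -
  define \<sigma> where "\<sigma> = (\<lambda>k. if k = t then p else if k = p then t else k)"
  have bij: "bij_betw \<sigma> {0..<m*n} {0..<m*n}" unfolding \<sigma>_def using swap_bij tp by auto
  have tk: "take t (psi \<sigma> (m*n) w) = take t w" if "length w = m*n" for w
    by (rule nth_equalityI) (use that tp in \<open>auto simp: psi_nth \<sigma>_def\<close>)
  show ?thesis
  proof (rule card_inj_on_le)
    show "inj_on (psi \<sigma> (m*n)) {w\<in>decks m n. g (take t w) = w ! t}"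
      by (rule inj_on_subset[OF psi_inj]) (use bij in \<open>auto simp: bij_betw_def decks_def\<close>)
    show "psi \<sigma> (m*n) ` {w\<in>decks m n. g (take t w) = w ! t} \<subseteq> {w\<in>decks m n. g (take t w) = w ! p}"
    proof safe
      fix w assume w: "w \<in> decks m n" "g (take t w) = w ! t"
      show "psi \<sigma> (m*n) w \<in> decks m n" using psi_decks bij w by blast
      have "length w = m*n" using w by (simp add: decks_def)
      then show "g (take t (psi \<sigma> (m*n) w)) = psi \<sigma> (m*n) w ! p"
        using w tp tk by (simp add: psi_nth \<sigma>_def)
    qed
    show "finite {w\<in>decks m n. g (take t w) = w ! p}" using finite_decks by simp
  qed
qed

lemma swap_card_ge:
  assumes tp: "t \<le> p" "p < m*n"
  shows "card {w\<in>decks m n. g (take t w) = w ! p} \<le> card {w\<in>decks m n. g (take t w) = w ! t}"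
proof -
  define \<sigma> where "\<sigma> = (\<lambda>k. if k = t then p else if k = p then t else k)"
  have bij: "bij_betw \<sigma> {0..<m*n} {0..<m*n}" unfolding \<sigma>_def using swap_bij tp by auto
  have tk: "take t (psi \<sigma> (m*n) w) = take t w" if "length w = m*n" for w
    by (rule nth_equalityI) (use that tp in \<open>auto simp: psi_nth \<sigma>_def\<close>)
  show ?thesis
  proof (rule card_inj_on_le)
    show "inj_on (psi \<sigma> (m*n)) {w\<in>decks m n. g (take t w) = w ! p}"
      by (rule inj_on_subset[OF psi_inj]) (use bij in \<open>auto simp: bij_betw_def decks_def\<close>)
    show "psi \<sigma> (m*n) ` {w\<in>decks m n. g (take t w) = w ! p} \<subseteq> {w\<in>decks m n. g (take t w) = w ! t}"
    proof safe
      fix w assume w: "w \<in> decks m n" "g (take t w) = w ! p"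
      show "psi \<sigma> (m*n) w \<in> decks m n" using psi_decks bij w by blast
      have "length w = m*n" using w by (simp add: decks_def)
      then show "g (take t (psi \<sigma> (m*n) w)) = psi \<sigma> (m*n) w ! t"
        using w tp tk by (simp add: psi_nth \<sigma>_def)
    qed
    show "finite {w\<in>decks m n. g (take t w) = w ! t}" using finite_decks by simp
  qed
qed

lemma swap_sum:
  assumes "t < m*n"
  shows "(m*n - t) * card {w\<in>decks m n. g (take t w) = w ! t}
       = (\<Sum>w\<in>decks m n. cnt w {t..<m*n} (g (take t w)))"
proof -
  have "(\<Sum>w\<in>decks m n. cnt w {t..<m*n} (g (take t w)))
      = (\<Sum>w\<in>decks m n. card {p\<in>{t..<m*n}. g (take t w) = w ! p})"
    unfolding cnt_def by (intro sum.cong refl) (auto intro!: arg_cong[where f=card])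
  also have "\<dots> = (\<Sum>p\<in>{t..<m*n}. card {w\<in>decks m n. g (take t w) = w ! p})"
    by (rule double_count[OF finite_decks]) simp
  also have "\<dots> = (\<Sum>p\<in>{t..<m*n}. card {w\<in>decks m n. g (take t w) = w ! t})"
    by (intro sum.cong refl antisym swap_card_le swap_card_ge) auto
  finally show ?thesis by simp
qed

lemma div_aux: "(x::real) > 0 \<Longrightarrow> x * c = s \<Longrightarrow> c = s / x"
  by (simp add: field_simps)

definition fc :: "(nat list \<Rightarrow> nat) \<Rightarrow> nat \<Rightarrow> nat \<Rightarrow> nat list \<Rightarrow> nat \<Rightarrow> nat" where
  "fc G m n w t = cnt w {t..<m*n} (G (take t w))"

lemma expected_formula:
  "expected_correct m n G =
     (\<Sum>t<m*n. (\<Sum>w\<in>decks m n. real (fc G m n w t)) / real (m*n - t)) / real (card (decks m n))"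
proof -
  have "(\<Sum>w\<in>decks m n. correct G w) = (\<Sum>w\<in>decks m n. card {t\<in>{..<m*n}. G (take t w) = w ! t})"
  proof (intro sum.cong refl)
    fix w assume "w \<in> decks m n"
    then have "{t. t < length w \<and> G (take t w) = w ! t} = {t\<in>{..<m*n}. G (take t w) = w ! t}"
      by (auto simp: decks_def)
    then show "correct G w = card {t\<in>{..<m*n}. G (take t w) = w ! t}" by (simp add: correct_def)
  qed
  also have "\<dots> = (\<Sum>t\<in>{..<m*n}. card {w\<in>decks m n. G (take t w) = w ! t})"
    by (rule double_count[OF finite_decks]) simp
  finally have 1: "(\<Sum>w\<in>decks m n. correct G w) = (\<Sum>t<m*n. card {w\<in>decks m n. G (take t w) = w ! t})" .
  have 2: "real (card {w\<in>decks m n. G (take t w) = w ! t}) = (\<Sum>w\<in>decks m n. real (fc G m n w t)) / real (m*n - t)"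
    if "t < m*n" for t
  proof -
    have "(m*n - t) * card {w\<in>decks m n. G (take t w) = w ! t} = (\<Sum>w\<in>decks m n. fc G m n w t)"
      using swap_sum[OF that, of G] unfolding fc_def .
    then have "real (m*n - t) * real (card {w\<in>decks m n. G (take t w) = w ! t}) = (\<Sum>w\<in>decks m n. real (fc G m n w t))"
      by (metis of_nat_mult of_nat_sum)
    moreover have "real (m*n - t) > 0" using that by (simp only: of_nat_0_less_iff zero_less_diff)
    ultimately show ?thesis by (rule div_aux[rotated])
  qed
  have "(\<Sum>w\<in>decks m n. real (correct G w)) = real (\<Sum>w\<in>decks m n. correct G w)" by simp
  also have "\<dots> = (\<Sum>t<m*n. real (card {w\<in>decks m n. G (take t w) = w ! t}))" unfolding 1 by simp
  also have "\<dots> = (\<Sum>t<m*n. (\<Sum>w\<in>decks m n. real (fc G m n w t)) / real (m*n - t))"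
    by (intro sum.cong refl 2) simp
  finally show ?thesis by (simp add: expected_correct_def)
qed

lemma binom_ratio:
  assumes "j \<le> s" "s \<le> N"
  shows "real (s choose j) / real (N choose j) = (\<Prod>i<j. (real s - real i) / (real N - real i))"
proof -
  have "real (s choose j) / real (N choose j) =
      (\<Prod>i=0..<j. real (s - i) / real (j - i)) / (\<Prod>i=0..<j. real (N - i) / real (j - i))"
    using assms by (simp add: binomial_altdef_of_nat)
  also have "\<dots> = (\<Prod>i=0..<j. (real (s - i) / real (j - i)) / (real (N - i) / real (j - i)))"
    by (simp add: prod_dividef)
  also have "\<dots> = (\<Prod>i=0..<j. (real s - real i) / (real N - real i))"
  proof (rule prod.cong)
    fix i assume i: "i \<in> {0..<j}"
    then have "real (j - i) > 0" by simp
    moreover have "real (s - i) = real s - real i" "real (N - i) = real N - real i"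
      using i assms by (auto simp: of_nat_diff)
    ultimately show "(real (s - i) / real (j - i)) / (real (N - i) / real (j - i)) = (real s - real i) / (real N - real i)"
      by simp
  qed simp
  finally show ?thesis by (simp add: atLeast0LessThan)
qed

lemma binom_ratio_le:
  assumes "s \<le> N"
  shows "real (s choose j) / real (N choose j) \<le> (real s / real N)^j"
proof (cases "j \<le> s")
  case False
  then show ?thesis by (simp add: binomial_eq_0)
next
  case True
  have "real (s choose j) / real (N choose j) = (\<Prod>i<j. (real s - real i) / (real N - real i))"
    using binom_ratio True assms by simp
  also have "\<dots> \<le> (\<Prod>i<j. real s / real N)"
  proof (rule prod_mono)
    fix i assume "i \<in> {..<j}"
    then have i: "real i < real N" "real i < real s" using True assms by auto
    have "real i * real s \<le> real i * real N" using assms by (simp add: mult_left_mono)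
    then have "(real s - real i) * real N \<le> real s * (real N - real i)" by (simp add: algebra_simps)
    then show "0 \<le> (real s - real i) / (real N - real i) \<and> (real s - real i) / (real N - real i) \<le> real s / real N"
      using i by (simp add: divide_simps)
  qed
  finally show ?thesis by simp
qed

lemma binom_ratio_ge:
  assumes "2*j \<le> s" "s \<le> N"
  shows "(real s / (2 * real N))^j \<le> real (s choose j) / real (N choose j)"
proof -
  have "(real s / (2 * real N))^j = (\<Prod>i<j. real s / (2 * real N))" by simp
  also have "\<dots> \<le> (\<Prod>i<j. (real s - real i) / (real N - real i))"
  proof (rule prod_mono)
    fix i assume "i \<in> {..<j}"
    then have i: "2 * real i < real s" "real i < real N" using assms by auto
    have h2: "real s * real i \<ge> 0" by simp
    have "real N * (2 * real i) \<le> real N * real s" using i by (intro mult_left_mono) auto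
    then have h1: "2 * (real i * real N) \<le> real s * real N" by (simp add: algebra_simps)
    have e1: "real s * (real N - real i) = real s * real N - real s * real i" by (simp add: algebra_simps)
    have e2: "(real s - real i) * (2 * real N) = 2 * (real s * real N) - 2 * (real i * real N)" by (simp add: algebra_simps)
    have "real s * (real N - real i) \<le> (real s - real i) * (2 * real N)" unfolding e1 e2 using h1 h2 by linarith
    then show "0 \<le> real s / (2 * real N) \<and> real s / (2 * real N) \<le> (real s - real i) / (real N - real i)"
      using i by (simp add: divide_simps)
  qed
  also have "\<dots> = real (s choose j) / real (N choose j)" using binom_ratio assms by simp
  finally show ?thesis .
qed

lemma binom_ratio_shift:
  assumes "2*j \<le> s" "s \<le> N"
  shows "real ((s - j) choose j) / real ((N - j) choose j) \<le> real (s choose j) / real (N choose j)"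
proof -
  have "real ((s - j) choose j) / real ((N - j) choose j) = (\<Prod>i<j. (real (s - j) - real i) / (real (N - j) - real i))"
    using binom_ratio assms by simp
  also have "\<dots> \<le> (\<Prod>i<j. (real s - real i) / (real N - real i))"
  proof (rule prod_mono)
    fix i assume "i \<in> {..<j}"
    then have i: "real i + real j < real s" "real s \<le> real N" using assms by auto
    have e: "real (s - j) = real s - real j" "real (N - j) = real N - real j" using assms by (auto simp: of_nat_diff)
    have "real j * real s \<le> real j * real N" using i by (simp add: mult_left_mono)
    then have "(real s - real j - real i) * (real N - real i) \<le> (real s - real i) * (real N - real j - real i)"
      by (simp add: algebra_simps)
    then show "0 \<le> (real (s - j) - real i) / (real (N - j) - real i) \<and>
        (real (s - j) - real i) / (real (N - j) - real i) \<le> (real s - real i) / (real N - real i)"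
      unfolding e using i by (simp add: divide_simps)
  qed
  also have "\<dots> = real (s choose j) / real (N choose j)" using binom_ratio assms by simp
  finally show ?thesis .
qed

lemma card_filter_real:
  assumes "finite A"
  shows "real (card {x\<in>A. P x}) = (\<Sum>x\<in>A. if P x then 1 else 0)"
  using assms by (simp add: sum.If_cases Int_def)

lemma cnt_mono: "finite T \<Longrightarrow> S \<subseteq> T \<Longrightarrow> cnt w S i \<le> cnt w T i"
  unfolding cnt_def by (rule card_mono) auto

lemma cnt_le_m:
  assumes "w \<in> decks m n" "i \<in> {1..n}" "S \<subseteq> {0..<m*n}"
  shows "cnt w S i \<le> m"
  using cnt_mono[of "{0..<m*n}" S w i] cnt_full[OF assms(1,2)] assms(3) by simp

lemma card_S_le: "S \<subseteq> {0..<m*n} \<Longrightarrow> card S \<le> m*n"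
  using card_mono[of "{0..<m*n}" S] by simp

definition e1 :: "nat \<Rightarrow> nat \<Rightarrow> nat \<Rightarrow> nat \<Rightarrow> real" where
  "e1 m n j s = real (m choose j) * real (s choose j) / real (m*n choose j)"

lemma E1:
  assumes S: "S \<subseteq> {0..<m*n}" and i: "i \<in> {1..n}" and j: "j \<le> m*n"
  shows "(\<Sum>w\<in>decks m n. real (cnt w S i choose j)) = real (card (decks m n)) * e1 m n j (card S)"
proof -
  have "(\<Sum>w\<in>decks m n. (cnt w S i choose j) * (cnt w S i choose 0)) * ((m*n choose j) * ((m*n - j) choose 0))
       = card (decks m n) * (m choose j) * (m choose 0) * ((card S choose j) * ((card S - j) choose 0))"
    by (rule main_count[OF S _ i i]) simp
  then have "(\<Sum>w\<in>decks m n. (cnt w S i choose j)) * (m*n choose j) = card (decks m n) * (m choose j) * (card S choose j)"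
    by simp
  then have "(\<Sum>w\<in>decks m n. real (cnt w S i choose j)) * real (m*n choose j) = real (card (decks m n)) * real (m choose j) * real (card S choose j)"
    by (metis of_nat_mult of_nat_sum)
  moreover have "real (m*n choose j) > 0" using j by simp
  ultimately show ?thesis unfolding e1_def by (simp add: field_simps)
qed

lemma E2:
  assumes S: "S \<subseteq> {0..<m*n}" and i: "i \<in> {1..n}" "i' \<in> {1..n}" "i \<noteq> i'" and j: "2*j \<le> card S"
  shows "(\<Sum>w\<in>decks m n. real (cnt w S i choose j) * real (cnt w S i' choose j)) \<le> real (card (decks m n)) * (e1 m n j (card S))^2"
proof -
  have sN: "card S \<le> m*n" using card_S_le[OF S] .
  have "(\<Sum>w\<in>decks m n. (cnt w S i choose j) * (cnt w S i' choose j)) * ((m*n choose j) * ((m*n - j) choose j))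
       = card (decks m n) * (m choose j) * (m choose j) * ((card S choose j) * ((card S - j) choose j))"
    by (rule main_count[OF S _ i(1,2)]) (use i in simp)
  then have eq: "(\<Sum>w\<in>decks m n. real (cnt w S i choose j) * real (cnt w S i' choose j)) * (real (m*n choose j) * real ((m*n - j) choose j))
       = real (card (decks m n)) * real (m choose j) * real (m choose j) * (real (card S choose j) * real ((card S - j) choose j))"
    by (metis (no_types, lifting) of_nat_mult of_nat_sum sum.cong)
  have p1: "real (m*n choose j) > 0" using j sN by simp
  have p2: "real ((m*n - j) choose j) > 0" using j sN by simp
  define r where "r = real (card S choose j) / real (m*n choose j)"
  have sh: "real ((card S - j) choose j) / real ((m*n - j) choose j) \<le> r"
    unfolding r_def by (rule binom_ratio_shift[OF j sN])
  have "(\<Sum>w\<in>decks m n. real (cnt w S i choose j) * real (cnt w S i' choose j))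
      = real (card (decks m n)) * real (m choose j) * real (m choose j) * r * (real ((card S - j) choose j) / real ((m*n - j) choose j))"
    using eq p1 p2 unfolding r_def by (simp add: field_simps)
  also have "\<dots> \<le> real (card (decks m n)) * real (m choose j) * real (m choose j) * r * r"
    using sh by (intro mult_left_mono) (auto simp: r_def)
  also have "\<dots> = real (card (decks m n)) * (e1 m n j (card S))^2"
    unfolding e1_def r_def by (simp add: power2_eq_square field_simps)
  finally show ?thesis .
qed

lemma probU:
  assumes S: "S \<subseteq> {0..<m*n}" and j: "j \<le> m*n"
  shows "real (card {w\<in>decks m n. \<exists>i\<in>{1..n}. j \<le> cnt w S i}) \<le> real (card (decks m n)) * (real n * e1 m n j (card S))"
proof -
  have "real (card {w\<in>decks m n. \<exists>i\<in>{1..n}. j \<le> cnt w S i}) = (\<Sum>w\<in>decks m n. if \<exists>i\<in>{1..n}. j \<le> cnt w S i then 1 else 0)"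
    by (rule card_filter_real[OF finite_decks])
  also have "\<dots> \<le> (\<Sum>w\<in>decks m n. \<Sum>i\<in>{1..n}. real (cnt w S i choose j))"
  proof (rule sum_mono)
    fix w assume "w \<in> decks m n"
    show "(if \<exists>i\<in>{1..n}. j \<le> cnt w S i then 1 else 0) \<le> (\<Sum>i\<in>{1..n}. real (cnt w S i choose j))"
    proof (cases "\<exists>i\<in>{1..n}. j \<le> cnt w S i")
      case True
      then obtain i where i: "i \<in> {1..n}" "j \<le> cnt w S i" by blast
      have "1 \<le> real (cnt w S i choose j)" using i by (simp add: Suc_le_eq)
      also have "\<dots> \<le> (\<Sum>i\<in>{1..n}. real (cnt w S i choose j))"
        by (rule member_le_sum) (use i in auto)
      finally show ?thesis using True by simp
    next
      case False
      then show ?thesis by (simp add: sum_nonneg)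
    qed
  qed
  also have "\<dots> = (\<Sum>i\<in>{1..n}. \<Sum>w\<in>decks m n. real (cnt w S i choose j))" by (rule sum.swap)
  also have "\<dots> = (\<Sum>i\<in>{1..n}. real (card (decks m n)) * e1 m n j (card S))"
    by (intro sum.cong refl E1[OF S _ j])
  also have "\<dots> = real (card (decks m n)) * (real n * e1 m n j (card S))" by simp
  finally show ?thesis .
qed

lemma probL:
  assumes S: "S \<subseteq> {0..<m*n}" and j: "1 \<le> j" "j \<le> m" "2*j \<le> card S" and n: "1 \<le> n"
  shows "real (card {w\<in>decks m n. \<forall>i\<in>{1..n}. cnt w S i < j}) \<le>
           real (card (decks m n)) * (real (m*n choose j) / (real n * real (card S choose j)))"
proof -
  let ?D = "decks m n" and ?I = "{1..n::nat}"
  define d where "d = real (card ?D)"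
  define e where "e = e1 m n j (card S)"
  define c where "c = real (m choose j)"
  define \<mu> where "\<mu> = real n * e"
  define C where "C i w = real (cnt w S i choose j)" for i w
  define Z where "Z w = (\<Sum>i\<in>?I. C i w)" for w
  have sN: "card S \<le> m*n" using card_S_le[OF S] .
  have jN: "j \<le> m*n" using j sN by simp
  have cpos: "c > 0" using j by (simp add: c_def)
  have epos: "e > 0" using j sN unfolding e_def e1_def by (simp add: divide_pos_pos)
  have mupos: "\<mu> > 0" using n epos by (simp add: \<mu>_def)
  have dpos: "d > 0" using decks_nonempty by (simp add: d_def)
  have E1': "(\<Sum>w\<in>?D. C i w) = d * e" if "i \<in> ?I" for i
    unfolding C_def d_def e_def by (rule E1[OF S that jN])
  have sumZ: "(\<Sum>w\<in>?D. Z w) = d * \<mu>"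
  proof -
    have "(\<Sum>w\<in>?D. Z w) = (\<Sum>i\<in>?I. \<Sum>w\<in>?D. C i w)" unfolding Z_def by (rule sum.swap)
    also have "\<dots> = (\<Sum>i\<in>?I. d * e)" by (intro sum.cong refl E1') 
    finally show ?thesis by (simp add: \<mu>_def)
  qed
  have Cle: "C i w \<le> c" if "w \<in> ?D" "i \<in> ?I" for i w
    unfolding C_def c_def using cnt_le_m[OF that S] by (simp add: binomial_right_mono)
  have Cnn: "C i w \<ge> 0" for i w by (simp add: C_def)
  have sq: "(\<Sum>w\<in>?D. C i w * C i w) \<le> c * (d * e)" if "i \<in> ?I" for i
  proof -
    have "(\<Sum>w\<in>?D. C i w * C i w) \<le> (\<Sum>w\<in>?D. c * C i w)"
      by (intro sum_mono mult_right_mono Cle Cnn that)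
    also have "\<dots> = c * (d * e)" unfolding sum_distrib_left[symmetric] using E1'[OF that] by simp
    finally show ?thesis .
  qed
  have cross: "(\<Sum>w\<in>?D. C i w * C i' w) \<le> d * e^2" if "i \<in> ?I" "i' \<in> ?I" "i \<noteq> i'" for i i'
    unfolding C_def d_def e_def by (rule E2[OF S that j(3)])
  have sumZ2: "(\<Sum>w\<in>?D. Z w * Z w) \<le> c * d * \<mu> + d * \<mu>^2"
  proof -
    have "(\<Sum>w\<in>?D. Z w * Z w) = (\<Sum>w\<in>?D. \<Sum>i\<in>?I. \<Sum>i'\<in>?I. C i w * C i' w)"
      unfolding Z_def by (simp add: sum_product)
    also have "\<dots> = (\<Sum>i\<in>?I. \<Sum>w\<in>?D. \<Sum>i'\<in>?I. C i w * C i' w)" by (rule sum.swap)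
    also have "\<dots> = (\<Sum>i\<in>?I. \<Sum>i'\<in>?I. \<Sum>w\<in>?D. C i w * C i' w)" by (simp only: sum.swap[of _ ?D])
    also have "\<dots> \<le> (\<Sum>i\<in>?I. c * (d * e) + real n * (d * e^2))"
    proof (rule sum_mono)
      fix i assume i: "i \<in> ?I"
      have "(\<Sum>i'\<in>?I. \<Sum>w\<in>?D. C i w * C i' w) = (\<Sum>w\<in>?D. C i w * C i w) + (\<Sum>i'\<in>?I - {i}. \<Sum>w\<in>?D. C i w * C i' w)"
        using i by (simp add: sum.remove)
      also have "(\<Sum>i'\<in>?I - {i}. \<Sum>w\<in>?D. C i w * C i' w) \<le> real (card (?I - {i})) * (d * e^2)"
        by (rule sum_bounded_above) (use cross i in auto)
      also have "real (card (?I - {i})) \<le> real n" using i by simp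
      then have "real (card (?I - {i})) * (d * e^2) \<le> real n * (d * e^2)"
        using dpos by (intro mult_right_mono) auto
      finally show "(\<Sum>i'\<in>?I. \<Sum>w\<in>?D. C i w * C i' w) \<le> c * (d * e) + real n * (d * e^2)"
        using sq[OF i] by linarith
    qed
    also have "\<dots> = c * d * \<mu> + d * \<mu>^2" by (simp add: \<mu>_def power2_eq_square algebra_simps)
    finally show ?thesis .
  qed
  have var: "(\<Sum>w\<in>?D. (Z w - \<mu>)^2) \<le> c * d * \<mu>"
  proof -
    have "(\<Sum>w\<in>?D. (Z w - \<mu>)^2) = (\<Sum>w\<in>?D. Z w * Z w) - 2 * \<mu> * (\<Sum>w\<in>?D. Z w) + d * \<mu>^2"
      by (simp add: power2_eq_square algebra_simps sum.distrib sum_subtractf sum_distrib_left d_def)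
    then show ?thesis using sumZ sumZ2 by (simp add: power2_eq_square algebra_simps)
  qed
  have "real (card {w\<in>?D. \<forall>i\<in>?I. cnt w S i < j}) = (\<Sum>w\<in>?D. if \<forall>i\<in>?I. cnt w S i < j then 1 else 0)"
    by (rule card_filter_real[OF finite_decks])
  also have "\<dots> \<le> (\<Sum>w\<in>?D. (Z w - \<mu>)^2 / \<mu>^2)"
  proof (rule sum_mono)
    fix w assume "w \<in> ?D"
    show "(if \<forall>i\<in>?I. cnt w S i < j then 1 else 0) \<le> (Z w - \<mu>)^2 / \<mu>^2"
    proof (cases "\<forall>i\<in>?I. cnt w S i < j")
      case True
      then have "Z w = 0" unfolding Z_def C_def by (intro sum.neutral) (simp add: binomial_eq_0)
      then show ?thesis using True mupos by simp
    next
      case False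
      then have "(if \<forall>i\<in>?I. cnt w S i < j then 1 else 0) = (0::real)" by (rule if_not_P)
      then show ?thesis by simp
    qed
  qed
  also have "\<dots> = (\<Sum>w\<in>?D. (Z w - \<mu>)^2) / \<mu>^2" by (simp add: sum_divide_distrib)
  also have "\<dots> \<le> c * d * \<mu> / \<mu>^2" using var mupos by (intro divide_right_mono) auto
  also have "\<dots> = d * (c / \<mu>)" using mupos by (simp add: power2_eq_square field_simps)
  also have "c / \<mu> = real (m*n choose j) / (real n * real (card S choose j))"
    using cpos mupos unfolding \<mu>_def e_def e1_def c_def by (simp add: field_simps)
  finally show ?thesis by (simp add: d_def)
qed

lemma cnt_split:
  assumes "w \<in> decks m n" "i \<in> {1..n}" "t \<le> m*n"
  shows "cnt w {t..<m*n} i + cnt w {0..<t} i = m"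
proof -
  have "{p\<in>{0..<m*n}. w ! p = i} = {p\<in>{t..<m*n}. w ! p = i} \<union> {p\<in>{0..<t}. w ! p = i}"
    using assms(3) by auto
  moreover have "card ({p\<in>{t..<m*n}. w ! p = i} \<union> {p\<in>{0..<t}. w ! p = i})
      = card {p\<in>{t..<m*n}. w ! p = i} + card {p\<in>{0..<t}. w ! p = i}"
    by (rule card_Un_disjoint) auto
  ultimately have "cnt w {0..<m*n} i = cnt w {t..<m*n} i + cnt w {0..<t} i"
    unfolding cnt_def by simp
  then show ?thesis using cnt_full[OF assms(1,2)] by simp
qed

lemma cnt_prefix:
  assumes "w \<in> decks m n" "t \<le> m*n"
  shows "cnt w {0..<t} i = count (mset (take t w)) i"
proof -
  have "count (mset (take t w)) i = card {p. p < length (take t w) \<and> i = take t w ! p}"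
    by (simp add: count_mset count_list_eq_length_filter length_filter_conv_card)
  also have "{p. p < length (take t w) \<and> i = take t w ! p} = {p\<in>{0..<t}. w ! p = i}"
    using assms by (auto simp: decks_def)
  finally show ?thesis by (simp add: cnt_def)
qed

lemma cnt_sum:
  assumes "w \<in> decks m n" "S \<subseteq> {0..<m*n}"
  shows "(\<Sum>k\<in>{1..n}. cnt w S k) = card S"
proof -
  have fS: "finite S" using assms(2) finite_subset by blast
  have "(\<Sum>k\<in>{1..n}. cnt w S k) = (\<Sum>k\<in>{1..n}. card {p\<in>S. k = w ! p})"
    unfolding cnt_def by (intro sum.cong refl arg_cong[where f=card]) auto
  also have "\<dots> = (\<Sum>p\<in>S. card {k\<in>{1..n}. k = w ! p})"
    by (rule double_count[OF _ fS]) simp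
  also have "\<dots> = (\<Sum>p\<in>S. 1)"
  proof (intro sum.cong refl)
    fix p assume "p \<in> S"
    then have "p < length w" using assms by (auto simp: decks_def)
    then have "w ! p \<in> set w" by simp
    then have "w ! p \<in> {1..n}" using assms(1) by (auto simp: decks_def)
    then have "{k\<in>{1..n}. k = w ! p} = {w ! p}" by auto
    then show "card {k\<in>{1..n}. k = w ! p} = 1" by simp
  qed
  finally show ?thesis by simp
qed

definition Gp :: "nat \<Rightarrow> nat list \<Rightarrow> nat" where
  "Gp n xs = (SOME i. i \<in> {1..n} \<and> (\<forall>k\<in>{1..n}. count (mset xs) i \<le> count (mset xs) k))"

definition Gm :: "nat \<Rightarrow> nat list \<Rightarrow> nat" where
  "Gm n xs = (SOME i. i \<in> {1..n} \<and> (\<forall>k\<in>{1..n}. count (mset xs) k \<le> count (mset xs) i))"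

lemma Gp_prop:
  assumes "1 \<le> n"
  shows "Gp n xs \<in> {1..n} \<and> (\<forall>k\<in>{1..n}. count (mset xs) (Gp n xs) \<le> count (mset xs) k)"
proof -
  let ?f = "\<lambda>i. count (mset xs) i"
  have ne: "?f ` {1..n} \<noteq> {}" using assms by auto
  obtain i where i: "i \<in> {1..n}" "?f i = Min (?f ` {1..n})" using Min_in[OF _ ne] by auto
  have "\<forall>k\<in>{1..n}. ?f i \<le> ?f k" using i by simp
  then have "\<exists>i. i \<in> {1..n} \<and> (\<forall>k\<in>{1..n}. ?f i \<le> ?f k)" using i by blast
  then show ?thesis unfolding Gp_def by (rule someI_ex)
qed

lemma Gm_prop:
  assumes "1 \<le> n"
  shows "Gm n xs \<in> {1..n} \<and> (\<forall>k\<in>{1..n}. count (mset xs) k \<le> count (mset xs) (Gm n xs))"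
proof -
  let ?f = "\<lambda>i. count (mset xs) i"
  have ne: "?f ` {1..n} \<noteq> {}" using assms by auto
  obtain i where i: "i \<in> {1..n}" "?f i = Max (?f ` {1..n})" using Max_in[OF _ ne] by auto
  have "\<forall>k\<in>{1..n}. ?f k \<le> ?f i" using i by simp
  then have "\<exists>i. i \<in> {1..n} \<and> (\<forall>k\<in>{1..n}. ?f k \<le> ?f i)" using i by blast
  then show ?thesis unfolding Gm_def by (rule someI_ex)
qed

lemma strategy_Gp: "1 \<le> n \<Longrightarrow> strategy n (Gp n)"
  using Gp_prop by (simp add: strategy_def)

lemma strategy_Gm: "1 \<le> n \<Longrightarrow> strategy n (Gm n)"
  using Gm_prop by (simp add: strategy_def)

lemma Gp_max:
  assumes "1 \<le> n" "w \<in> decks m n" "t \<le> m*n" "k \<in> {1..n}"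
  shows "cnt w {t..<m*n} k \<le> fc (Gp n) m n w t"
proof -
  have g: "Gp n (take t w) \<in> {1..n}" "count (mset (take t w)) (Gp n (take t w)) \<le> count (mset (take t w)) k"
    using Gp_prop[OF assms(1)] assms(4) by auto
  show ?thesis using cnt_split[OF assms(2) g(1) assms(3)] cnt_split[OF assms(2) assms(4) assms(3)]
      g(2) cnt_prefix[OF assms(2,3)] unfolding fc_def by simp
qed

lemma Gm_min:
  assumes "1 \<le> n" "w \<in> decks m n" "t \<le> m*n" "k \<in> {1..n}"
  shows "fc (Gm n) m n w t \<le> cnt w {t..<m*n} k"
proof -
  have g: "Gm n (take t w) \<in> {1..n}" "count (mset (take t w)) k \<le> count (mset (take t w)) (Gm n (take t w))"
    using Gm_prop[OF assms(1)] assms(4) by auto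
  show ?thesis using cnt_split[OF assms(2) g(1) assms(3)] cnt_split[OF assms(2) assms(4) assms(3)]
      g(2) cnt_prefix[OF assms(2,3)] unfolding fc_def by simp
qed

lemma fc_le_m:
  assumes "strategy n G" "w \<in> decks m n" "t \<le> m*n"
  shows "fc G m n w t \<le> m"
  unfolding fc_def by (rule cnt_le_m[OF assms(2)]) (use assms in \<open>auto simp: strategy_def\<close>)

lemma real_as_sum:
  assumes "x \<le> m"
  shows "real x = (\<Sum>j\<in>{1..m}. if j \<le> x then 1 else 0)"
proof -
  have "(\<Sum>j\<in>{1..m}. if j \<le> x then 1 else 0) = real (card {j\<in>{1..m}. j \<le> x})"
    by (rule card_filter_real[symmetric]) simp
  also have "{j\<in>{1..m}. j \<le> x} = {1..x}" using assms by auto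
  finally show ?thesis by simp
qed

definition PQ :: "nat \<Rightarrow> nat \<Rightarrow> nat \<Rightarrow> nat \<Rightarrow> real" where
  "PQ m n j t = real (card {w\<in>decks m n. \<exists>i\<in>{1..n}. j \<le> cnt w {t..<m*n} i}) / real (card (decks m n))"

definition PA :: "nat \<Rightarrow> nat \<Rightarrow> nat \<Rightarrow> real" where
  "PA m n t = real (card {w\<in>decks m n. \<forall>i\<in>{1..n}. 1 \<le> cnt w {t..<m*n} i}) / real (card (decks m n))"

definition B :: "nat \<Rightarrow> nat \<Rightarrow> real" where
  "B m n = (\<Sum>t<m*n. (\<Sum>j\<in>{1..m}. PQ m n j t) / real (m*n - t))"

lemma sumPQ:
  "(\<Sum>w\<in>decks m n. \<Sum>j\<in>{1..m}. (if \<exists>i\<in>{1..n}. j \<le> cnt w {t..<m*n} i then 1 else 0))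
     = real (card (decks m n)) * (\<Sum>j\<in>{1..m}. PQ m n j t)"
proof -
  have "(\<Sum>w\<in>decks m n. \<Sum>j\<in>{1..m}. (if \<exists>i\<in>{1..n}. j \<le> cnt w {t..<m*n} i then 1 else 0))
     = (\<Sum>j\<in>{1..m}. \<Sum>w\<in>decks m n. (if \<exists>i\<in>{1..n}. j \<le> cnt w {t..<m*n} i then 1 else (0::real)))"
    by (rule sum.swap)
  also have "\<dots> = (\<Sum>j\<in>{1..m}. real (card (decks m n)) * PQ m n j t)"
    unfolding PQ_def using decks_nonempty
    by (intro sum.cong refl) (simp add: card_filter_real[OF finite_decks])
  finally show ?thesis by (simp add: sum_distrib_left)
qed

lemma exp_le_B:
  assumes "strategy n G"
  shows "expected_correct m n G \<le> B m n"
proof -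
  let ?D = "decks m n"
  have d: "real (card ?D) > 0" using decks_nonempty by simp
  have "(\<Sum>t<m*n. (\<Sum>w\<in>?D. real (fc G m n w t)) / real (m*n - t))
      \<le> (\<Sum>t<m*n. real (card ?D) * (\<Sum>j\<in>{1..m}. PQ m n j t) / real (m*n - t))"
  proof (rule sum_mono)
    fix t assume t: "t \<in> {..<m*n}"
    have "(\<Sum>w\<in>?D. real (fc G m n w t)) \<le> (\<Sum>w\<in>?D. \<Sum>j\<in>{1..m}. (if \<exists>i\<in>{1..n}. j \<le> cnt w {t..<m*n} i then 1 else 0))"
    proof (rule sum_mono)
      fix w assume w: "w \<in> ?D"
      have g: "G (take t w) \<in> {1..n}" using assms by (simp add: strategy_def)
      have "real (fc G m n w t) = (\<Sum>j\<in>{1..m}. if j \<le> fc G m n w t then 1 else 0)"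
        by (rule real_as_sum[OF fc_le_m[OF assms w]]) (use t in simp)
      also have "\<dots> \<le> (\<Sum>j\<in>{1..m}. (if \<exists>i\<in>{1..n}. j \<le> cnt w {t..<m*n} i then 1 else 0))"
        by (rule sum_mono) (use g in \<open>auto simp: fc_def\<close>)
      finally show "real (fc G m n w t) \<le> (\<Sum>j\<in>{1..m}. (if \<exists>i\<in>{1..n}. j \<le> cnt w {t..<m*n} i then 1 else 0))" .
    qed
    also have "\<dots> = real (card ?D) * (\<Sum>j\<in>{1..m}. PQ m n j t)" by (rule sumPQ)
    finally have h: "(\<Sum>w\<in>?D. real (fc G m n w t)) \<le> real (card ?D) * (\<Sum>j\<in>{1..m}. PQ m n j t)" .
    show "(\<Sum>w\<in>?D. real (fc G m n w t)) / real (m*n - t) \<le> real (card ?D) * (\<Sum>j\<in>{1..m}. PQ m n j t) / real (m*n - t)"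
      by (intro divide_right_mono h) simp
  qed
  also have "\<dots> = real (card ?D) * B m n" unfolding B_def by (simp add: sum_distrib_left)
  finally have h: "(\<Sum>t<m*n. (\<Sum>w\<in>?D. real (fc G m n w t)) / real (m*n - t)) \<le> real (card ?D) * B m n" .
  show ?thesis unfolding expected_formula pos_divide_le_eq[OF d] using h by (simp only: mult.commute)
qed

lemma exp_Gp_ge_B:
  assumes "1 \<le> n"
  shows "B m n \<le> expected_correct m n (Gp n)"
proof -
  let ?D = "decks m n"
  have d: "real (card ?D) > 0" using decks_nonempty by simp
  have "(\<Sum>t<m*n. real (card ?D) * (\<Sum>j\<in>{1..m}. PQ m n j t) / real (m*n - t))
      \<le> (\<Sum>t<m*n. (\<Sum>w\<in>?D. real (fc (Gp n) m n w t)) / real (m*n - t))"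
  proof (rule sum_mono)
    fix t assume t: "t \<in> {..<m*n}"
    have "(\<Sum>w\<in>?D. \<Sum>j\<in>{1..m}. (if \<exists>i\<in>{1..n}. j \<le> cnt w {t..<m*n} i then 1 else 0)) \<le> (\<Sum>w\<in>?D. real (fc (Gp n) m n w t))"
    proof (rule sum_mono)
      fix w assume w: "w \<in> ?D"
      have "(\<Sum>j\<in>{1..m}. (if \<exists>i\<in>{1..n}. j \<le> cnt w {t..<m*n} i then 1 else 0))
          \<le> (\<Sum>j\<in>{1..m}. if j \<le> fc (Gp n) m n w t then 1 else (0::real))"
      proof (rule sum_mono)
        fix j assume "j \<in> {1..m}"
        show "(if \<exists>i\<in>{1..n}. j \<le> cnt w {t..<m*n} i then 1 else 0) \<le> (if j \<le> fc (Gp n) m n w t then 1 else (0::real))"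
        proof (cases "\<exists>i\<in>{1..n}. j \<le> cnt w {t..<m*n} i")
          case True
          then obtain i where i: "i \<in> {1..n}" "j \<le> cnt w {t..<m*n} i" by blast
          have "cnt w {t..<m*n} i \<le> fc (Gp n) m n w t" using Gp_max[OF assms w _ i(1), of t] t by simp
          then have "j \<le> fc (Gp n) m n w t" using i(2) by linarith
          then show ?thesis by simp
        next
          case False
          then show ?thesis by simp
        qed
      qed
      also have "\<dots> = real (fc (Gp n) m n w t)"
        by (rule real_as_sum[symmetric, OF fc_le_m[OF strategy_Gp[OF assms] w]]) (use t in simp)
      finally show "(\<Sum>j\<in>{1..m}. (if \<exists>i\<in>{1..n}. j \<le> cnt w {t..<m*n} i then 1 else 0)) \<le> real (fc (Gp n) m n w t)" .
    qed
    then have h: "real (card ?D) * (\<Sum>j\<in>{1..m}. PQ m n j t) \<le> (\<Sum>w\<in>?D. real (fc (Gp n) m n w t))"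
      unfolding sumPQ .
    show "real (card ?D) * (\<Sum>j\<in>{1..m}. PQ m n j t) / real (m*n - t) \<le> (\<Sum>w\<in>?D. real (fc (Gp n) m n w t)) / real (m*n - t)"
      by (intro divide_right_mono h) simp
  qed
  moreover have "(\<Sum>t<m*n. real (card ?D) * (\<Sum>j\<in>{1..m}. PQ m n j t) / real (m*n - t)) = real (card ?D) * B m n"
    unfolding B_def by (simp add: sum_distrib_left)
  ultimately have h: "real (card ?D) * B m n \<le> (\<Sum>t<m*n. (\<Sum>w\<in>?D. real (fc (Gp n) m n w t)) / real (m*n - t))"
    by simp
  show ?thesis unfolding expected_formula pos_le_divide_eq[OF d] using h by (simp only: mult.commute)
qed

lemma Cplus_eq_B:
  assumes "1 \<le> n"
  shows "Cplus m n = B m n"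
  unfolding Cplus_def
proof (rule cSup_eq_maximum)
  have "B m n = expected_correct m n (Gp n)"
    using exp_Gp_ge_B[OF assms] exp_le_B[OF strategy_Gp[OF assms]] by (rule antisym)
  then show "B m n \<in> (\<lambda>G. expected_correct m n G) ` {G. strategy n G}"
    using strategy_Gp[OF assms] by blast
  show "\<And>x. x \<in> (\<lambda>G. expected_correct m n G) ` {G. strategy n G} \<Longrightarrow> x \<le> B m n"
    using exp_le_B by auto
qed

lemma card_compl_real:
  assumes "finite A"
  shows "real (card {x\<in>A. P x}) = real (card A) - real (card {x\<in>A. \<not> P x})"
proof -
  have "card A = card {x\<in>A. P x} + card {x\<in>A. \<not> P x}"
    using assms by (subst card_Un_disjoint[symmetric]) (auto intro: arg_cong[where f=card])
  then show ?thesis by simp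
qed

lemma PA_le1: "PA m n t \<le> 1"
  unfolding PA_def using decks_nonempty card_mono[OF finite_decks, of "{w\<in>decks m n. \<forall>i\<in>{1..n}. 1 \<le> cnt w {t..<m*n} i}"]
  by (simp add: divide_le_eq_1)

lemma PA_nonneg: "PA m n t \<ge> 0"
  unfolding PA_def by simp

lemma PQ_le1: "PQ m n j t \<le> 1"
  unfolding PQ_def using decks_nonempty card_mono[OF finite_decks, of "{w\<in>decks m n. \<exists>i\<in>{1..n}. j \<le> cnt w {t..<m*n} i}"]
  by (simp add: divide_le_eq_1)

lemma PQ_nonneg: "PQ m n j t \<ge> 0"
  unfolding PQ_def by simp

lemma PA_set:
  assumes "t \<le> m*n"
  shows "{w\<in>decks m n. \<forall>i\<in>{1..n}. 1 \<le> cnt w {t..<m*n} i} = {w\<in>decks m n. \<forall>i\<in>{1..n}. cnt w {0..<t} i < m}"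
proof -
  have iff: "(1 \<le> cnt w {t..<m*n} i) = (cnt w {0..<t} i < m)" if "w \<in> decks m n" "i \<in> {1..n}" for w i
  proof -
    have "cnt w {t..<m*n} i + cnt w {0..<t} i = m" by (rule cnt_split[OF that assms])
    then show ?thesis by arith
  qed
  show ?thesis
  proof (rule Collect_cong)
    fix w show "(w \<in> decks m n \<and> (\<forall>i\<in>{1..n}. 1 \<le> cnt w {t..<m*n} i)) = (w \<in> decks m n \<and> (\<forall>i\<in>{1..n}. cnt w {0..<t} i < m))"
      using iff by blast
  qed
qed

lemma PA_low:
  assumes "t \<le> m*n" "m \<le> m*n"
  shows "PA m n t \<ge> 1 - real n * e1 m n m t"
proof -
  let ?D = "decks m n"
  have d: "real (card ?D) > 0" using decks_nonempty by simp
  have eq: "real (card {w\<in>?D. \<forall>i\<in>{1..n}. cnt w {0..<t} i < m})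
      = real (card ?D) - real (card {w\<in>?D. \<not> (\<forall>i\<in>{1..n}. cnt w {0..<t} i < m)})"
    by (rule card_compl_real[OF finite_decks])
  have se: "{w\<in>?D. \<not> (\<forall>i\<in>{1..n}. cnt w {0..<t} i < m)} = {w\<in>?D. \<exists>i\<in>{1..n}. m \<le> cnt w {0..<t} i}"
    by (auto simp: not_less)
  have le: "real (card {w\<in>?D. \<exists>i\<in>{1..n}. m \<le> cnt w {0..<t} i}) \<le> real (card ?D) * (real n * e1 m n m (card {0..<t}))"
    by (rule probU) (use assms in auto)
  have le': "real (card {w\<in>?D. \<exists>i\<in>{1..n}. m \<le> cnt w {0..<t} i}) \<le> real (card ?D) * (real n * e1 m n m t)"
    using le by simp
  have eq': "real (card {w\<in>?D. \<forall>i\<in>{1..n}. cnt w {0..<t} i < m})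
      = real (card ?D) - real (card {w\<in>?D. \<exists>i\<in>{1..n}. m \<le> cnt w {0..<t} i})"
    using eq unfolding se .
  have "real (card {w\<in>?D. \<forall>i\<in>{1..n}. cnt w {0..<t} i < m}) \<ge> real (card ?D) - real (card ?D) * (real n * e1 m n m t)"
    using eq' le' by linarith
  then have "real (card {w\<in>?D. \<forall>i\<in>{1..n}. cnt w {0..<t} i < m}) \<ge> real (card ?D) * (1 - real n * e1 m n m t)"
    by (simp add: algebra_simps)
  then show ?thesis unfolding PA_def PA_set[OF assms(1)] using d by (simp add: pos_le_divide_eq mult.commute)
qed

lemma PA_up:
  assumes "2*m \<le> t" "t \<le> m*n" "1 \<le> m" "1 \<le> n"
  shows "PA m n t \<le> real (m*n choose m) / (real n * real (t choose m))"
proof -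
  let ?D = "decks m n"
  have d: "real (card ?D) > 0" using decks_nonempty by simp
  have "real (card {w\<in>?D. \<forall>i\<in>{1..n}. cnt w {0..<t} i < m}) \<le>
           real (card ?D) * (real (m*n choose m) / (real n * real (card {0..<t} choose m)))"
    by (rule probL) (use assms in auto)
  then show ?thesis unfolding PA_def PA_set[OF assms(2)] using d by (simp add: pos_divide_le_eq mult.commute)
qed

lemma PQ_up:
  assumes "j \<le> m*n" "t \<le> m*n"
  shows "PQ m n j t \<le> real n * e1 m n j (m*n - t)"
proof -
  have d: "real (card (decks m n)) > 0" using decks_nonempty by simp
  have "real (card {w\<in>decks m n. \<exists>i\<in>{1..n}. j \<le> cnt w {t..<m*n} i}) \<le> real (card (decks m n)) * (real n * e1 m n j (card {t..<m*n}))"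
    by (rule probU) (use assms in auto)
  then show ?thesis unfolding PQ_def using d by (simp add: pos_divide_le_eq mult.commute)
qed

lemma PQ_low:
  assumes "1 \<le> j" "j \<le> m" "2*j \<le> m*n - t" "1 \<le> n"
  shows "PQ m n j t \<ge> 1 - real (m*n choose j) / (real n * real ((m*n - t) choose j))"
proof -
  let ?D = "decks m n"
  have d: "real (card ?D) > 0" using decks_nonempty by simp
  have eq: "real (card {w\<in>?D. \<exists>i\<in>{1..n}. j \<le> cnt w {t..<m*n} i})
      = real (card ?D) - real (card {w\<in>?D. \<not> (\<exists>i\<in>{1..n}. j \<le> cnt w {t..<m*n} i)})"
    by (rule card_compl_real[OF finite_decks])
  have se: "{w\<in>?D. \<not> (\<exists>i\<in>{1..n}. j \<le> cnt w {t..<m*n} i)} = {w\<in>?D. \<forall>i\<in>{1..n}. cnt w {t..<m*n} i < j}"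
    by (auto simp: not_le)
  have le: "real (card {w\<in>?D. \<forall>i\<in>{1..n}. cnt w {t..<m*n} i < j}) \<le> real (card ?D) * (real (m*n choose j) / (real n * real (card {t..<m*n} choose j)))"
    by (rule probL) (use assms in auto)
  have "real (card {w\<in>?D. \<exists>i\<in>{1..n}. j \<le> cnt w {t..<m*n} i}) \<ge>
      real (card ?D) * (1 - real (m*n choose j) / (real n * real ((m*n - t) choose j)))"
    using eq le unfolding se by (simp add: algebra_simps)
  then show ?thesis unfolding PQ_def using d by (simp add: pos_le_divide_eq mult.commute)
qed

lemma exp_nonneg_terms:
  "(\<Sum>w\<in>decks m n. real (fc G m n w t)) / real (m*n - t) \<ge> 0"
  by (simp add: sum_nonneg)

lemma exp_ge_inv_n:
  assumes "strategy n G" "1 \<le> n" "1 \<le> m"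
  shows "expected_correct m n G \<ge> 1 / real n"
proof -
  let ?D = "decks m n"
  have d: "real (card ?D) > 0" using decks_nonempty by simp
  have N: "0 < m*n" using assms by simp
  have f0: "fc G m n w 0 = m" if "w \<in> ?D" for w
    unfolding fc_def using cnt_full[OF that] assms(1) by (simp add: strategy_def)
  have "(\<Sum>w\<in>?D. real (fc G m n w 0)) / real (m*n - 0) = real (card ?D) * real m / real (m*n)"
    using f0 by simp
  moreover have "(\<Sum>w\<in>?D. real (fc G m n w 0)) / real (m*n - 0) \<le> (\<Sum>t<m*n. (\<Sum>w\<in>?D. real (fc G m n w t)) / real (m*n - t))"
    by (rule member_le_sum[where f="\<lambda>t. (\<Sum>w\<in>?D. real (fc G m n w t)) / real (m*n - t)" and i=0])
       (use N in \<open>auto simp del: of_nat_diff intro!: divide_nonneg_nonneg sum_nonneg\<close>)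
  ultimately have "real (card ?D) * real m / real (m*n) \<le> (\<Sum>t<m*n. (\<Sum>w\<in>?D. real (fc G m n w t)) / real (m*n - t))"
    by simp
  moreover have "real (card ?D) * real m / real (m*n) = real (card ?D) * (1 / real n)"
    using assms by (simp add: field_simps)
  ultimately show ?thesis unfolding expected_formula pos_le_divide_eq[OF d] by (simp add: mult.commute)
qed

lemma exp_ge_PA:
  assumes "strategy n G"
  shows "expected_correct m n G \<ge> (\<Sum>t<m*n. PA m n t) / real (m*n)"
proof -
  let ?D = "decks m n"
  have d: "real (card ?D) > 0" using decks_nonempty by simp
  have "real (card ?D) * ((\<Sum>t<m*n. PA m n t) / real (m*n)) = (\<Sum>t<m*n. real (card ?D) * PA m n t / real (m*n))"
    by (simp add: sum_distrib_left sum_divide_distrib)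
  also have "\<dots> \<le> (\<Sum>t<m*n. (\<Sum>w\<in>?D. real (fc G m n w t)) / real (m*n - t))"
  proof (rule sum_mono)
    fix t assume t: "t \<in> {..<m*n}"
    have "real (card ?D) * PA m n t = (\<Sum>w\<in>?D. if \<forall>i\<in>{1..n}. 1 \<le> cnt w {t..<m*n} i then 1 else 0)"
      unfolding PA_def using d by (simp add: card_filter_real[OF finite_decks])
    also have "\<dots> \<le> (\<Sum>w\<in>?D. real (fc G m n w t))"
    proof (rule sum_mono)
      fix w assume "w \<in> ?D"
      have g: "G (take t w) \<in> {1..n}" using assms by (simp add: strategy_def)
      show "(if \<forall>i\<in>{1..n}. 1 \<le> cnt w {t..<m*n} i then 1 else 0) \<le> real (fc G m n w t)"
        using g unfolding fc_def by auto
    qed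
    finally have h: "real (card ?D) * PA m n t \<le> (\<Sum>w\<in>?D. real (fc G m n w t))" .
    have p: "0 < real (m*n - t)" using t by (simp only: of_nat_0_less_iff zero_less_diff lessThan_iff)
    have le: "real (m*n - t) \<le> real (m*n)" by (simp only: of_nat_le_iff diff_le_self)
    have q: "0 < real (m*n)" using p le by linarith
    have "real (card ?D) * PA m n t / real (m*n) \<le> real (card ?D) * PA m n t / real (m*n - t)"
      by (rule divide_left_mono[OF le]) (use mult_pos_pos[OF q p] d PA_nonneg in \<open>simp_all del: of_nat_diff\<close>)
    also have "\<dots> \<le> (\<Sum>w\<in>?D. real (fc G m n w t)) / real (m*n - t)"
      by (intro divide_right_mono h) simp
    finally show "real (card ?D) * PA m n t / real (m*n) \<le> (\<Sum>w\<in>?D. real (fc G m n w t)) / real (m*n - t)" .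
  qed
  finally show ?thesis unfolding expected_formula pos_le_divide_eq[OF d] by (simp add: mult.commute)
qed

lemma fc_Gm_bound:
  assumes n: "1 \<le> n" and w: "w \<in> decks m n" and t: "t < m*n"
  shows "real (fc (Gm n) m n w t) / real (m*n - t) \<le> (if \<forall>i\<in>{1..n}. 1 \<le> cnt w {t..<m*n} i then 1 else 0) / real n"
proof (cases "\<forall>i\<in>{1..n}. 1 \<le> cnt w {t..<m*n} i")
  case True
  have "(\<Sum>k\<in>{1..n}. fc (Gm n) m n w t) \<le> (\<Sum>k\<in>{1..n}. cnt w {t..<m*n} k)"
    by (rule sum_mono) (use Gm_min[OF n w] t in auto)
  also have "\<dots> = m*n - t" using cnt_sum[OF w, of "{t..<m*n}"] by simp
  finally have "n * fc (Gm n) m n w t \<le> m*n - t" by simp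
  then have "real n * real (fc (Gm n) m n w t) \<le> real (m*n - t)" by (metis of_nat_le_iff of_nat_mult)
  moreover have xpos: "0 < real (m*n - t)" using t by (simp only: of_nat_0_less_iff zero_less_diff)
  ultimately have "real (fc (Gm n) m n w t) / real (m*n - t) \<le> 1 / real n"
    using n by (simp del: of_nat_diff add: divide_simps mult.commute)
  then show ?thesis using True by simp
next
  case False
  then obtain k where k: "k \<in> {1..n}" "cnt w {t..<m*n} k < 1" by auto
  then have "fc (Gm n) m n w t = 0" using Gm_min[OF n w _ k(1), of t] t by simp
  then show ?thesis using False by simp
qed

lemma exp_Gm_le_PA:
  assumes "1 \<le> n"
  shows "expected_correct m n (Gm n) \<le> (\<Sum>t<m*n. PA m n t) / real n"
proof -
  let ?D = "decks m n"
  have d: "real (card ?D) > 0" using decks_nonempty by simp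
  have "(\<Sum>t<m*n. (\<Sum>w\<in>?D. real (fc (Gm n) m n w t)) / real (m*n - t)) \<le> (\<Sum>t<m*n. real (card ?D) * PA m n t / real n)"
  proof (rule sum_mono)
    fix t assume t: "t \<in> {..<m*n}"
    have "(\<Sum>w\<in>?D. real (fc (Gm n) m n w t)) / real (m*n - t) = (\<Sum>w\<in>?D. real (fc (Gm n) m n w t) / real (m*n - t))"
      by (simp add: sum_divide_distrib)
    also have "\<dots> \<le> (\<Sum>w\<in>?D. (if \<forall>i\<in>{1..n}. 1 \<le> cnt w {t..<m*n} i then 1 else 0) / real n)"
      by (rule sum_mono) (use fc_Gm_bound[OF assms] t in auto)
    also have "\<dots> = real (card ?D) * PA m n t / real n"
      unfolding PA_def using d by (simp add: card_filter_real[OF finite_decks] sum_divide_distrib[symmetric])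
    finally show "(\<Sum>w\<in>?D. real (fc (Gm n) m n w t)) / real (m*n - t) \<le> real (card ?D) * PA m n t / real n" .
  qed
  also have "\<dots> = real (card ?D) * ((\<Sum>t<m*n. PA m n t) / real n)"
    by (simp add: sum_distrib_left sum_divide_distrib)
  finally show ?thesis unfolding expected_formula pos_divide_le_eq[OF d] by (simp add: mult.commute)
qed

lemma PA_m1:
  assumes "1 \<le> t" "t \<le> n"
  shows "PA 1 n t = 0"
proof -
  have "{w\<in>decks 1 n. \<forall>i\<in>{1..n}. 1 \<le> cnt w {t..<1*n} i} = {}"
  proof (rule ccontr)
    assume "{w\<in>decks 1 n. \<forall>i\<in>{1..n}. 1 \<le> cnt w {t..<1*n} i} \<noteq> {}"
    then obtain w where w: "w \<in> decks 1 n" "\<forall>i\<in>{1..n}. 1 \<le> cnt w {t..<1*n} i" by auto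
    have "(\<Sum>k\<in>{1..n}. (1::nat)) \<le> (\<Sum>k\<in>{1..n}. cnt w {t..<1*n} k)"
      by (rule sum_mono) (use w in auto)
    also have "\<dots> = n - t" using cnt_sum[OF w(1), of "{t..<1*n}"] by simp
    finally show False using assms by simp
  qed
  then show ?thesis unfolding PA_def by (simp only: card.empty of_nat_0 div_0)
qed

lemma Cminus_lower:
  assumes "1 \<le> n" "1 \<le> m"
  shows "Cminus m n \<ge> 1 / real n" "Cminus m n \<ge> (\<Sum>t<m*n. PA m n t) / real (m*n)"
proof -
  have ne: "(\<lambda>G. expected_correct m n G) ` {G. strategy n G} \<noteq> {}" using strategy_Gp[OF assms(1)] by auto
  show "Cminus m n \<ge> 1 / real n" unfolding Cminus_def
    by (rule cInf_greatest[OF ne]) (use exp_ge_inv_n assms in auto)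
  show "Cminus m n \<ge> (\<Sum>t<m*n. PA m n t) / real (m*n)" unfolding Cminus_def
    by (rule cInf_greatest[OF ne]) (use exp_ge_PA in auto)
qed

lemma Cminus_upper:
  assumes "1 \<le> n" "1 \<le> m"
  shows "Cminus m n \<le> (\<Sum>t<m*n. PA m n t) / real n"
proof -
  have "bdd_below ((\<lambda>G. expected_correct m n G) ` {G. strategy n G})"
    by (rule bdd_belowI[of _ "1 / real n"]) (use exp_ge_inv_n assms in auto)
  then have "Cminus m n \<le> expected_correct m n (Gm n)" unfolding Cminus_def
    by (rule cInf_lower[rotated]) (use strategy_Gm[OF assms(1)] in auto)
  also have "\<dots> \<le> (\<Sum>t<m*n. PA m n t) / real n" by (rule exp_Gm_le_PA[OF assms(1)])
  finally show ?thesis .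
qed

lemma ln_step_upper:
  assumes "1 \<le> n"
  shows "1 / real (Suc n) \<le> ln (real (Suc n)) - ln (real n)"
proof -
  have p: "0 < real n / (real n + 1)" using assms by simp
  have "ln (real n / (real n + 1)) \<le> real n / (real n + 1) - 1" by (rule ln_le_minus_one[OF p])
  moreover have "ln (real n / (real n + 1)) = ln (real n) - ln (real n + 1)" using assms by (simp add: ln_div)
  moreover have "real n / (real n + 1) - 1 = - (1 / (real n + 1))" by (simp add: field_simps)
  ultimately have "1 / (real n + 1) \<le> ln (real n + 1) - ln (real n)" by linarith
  then show ?thesis by (simp add: add.commute)
qed

lemma ln_step_lower:
  assumes "1 \<le> n"
  shows "ln (real (Suc n)) - ln (real n) \<le> 1 / real n"
proof -
  have "ln (1 + 1 / real n) \<le> 1 / real n" by (rule ln_add_one_self_le_self) simp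
  moreover have "1 + 1 / real n = (real n + 1) / real n" using assms by (simp add: field_simps)
  moreover have "ln ((real n + 1) / real n) = ln (real n + 1) - ln (real n)" using assms by (simp add: ln_div)
  ultimately show ?thesis by (simp add: add.commute)
qed

lemma harm_upper:
  assumes "1 \<le> K" "K \<le> N"
  shows "(\<Sum>s\<in>{K<..N}. 1 / real s) \<le> ln (real N) - ln (real K)"
  using assms(2)
proof (induction N rule: dec_induct)
  case base
  then show ?case by simp
next
  case (step n)
  have "{K<..Suc n} = insert (Suc n) {K<..n}" using step by auto
  then have "(\<Sum>s\<in>{K<..Suc n}. 1 / real s) = 1 / real (Suc n) + (\<Sum>s\<in>{K<..n}. 1 / real s)" by simp
  also have "\<dots> \<le> (ln (real (Suc n)) - ln (real n)) + (ln (real n) - ln (real K))"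
    using ln_step_upper[of n] step assms by (intro add_mono) auto
  finally show ?case by simp
qed

lemma harm_lower_aux:
  assumes "1 \<le> K" "K \<le> M"
  shows "ln (real M) - ln (real K) \<le> (\<Sum>s\<in>{K..<M}. 1 / real s)"
  using assms(2)
proof (induction M rule: dec_induct)
  case base
  then show ?case by simp
next
  case (step n)
  have "(\<Sum>s\<in>{K..<Suc n}. 1 / real s) = 1 / real n + (\<Sum>s\<in>{K..<n}. 1 / real s)"
    using step by (simp add: atLeastLessThanSuc)
  moreover have "ln (real (Suc n)) - ln (real n) \<le> 1 / real n" using ln_step_lower[of n] step assms by simp
  ultimately show ?case using step by linarith
qed

lemma harm_lower:
  assumes "1 \<le> K"
  shows "ln (real N + 1) - ln (real K) \<le> (\<Sum>s\<in>{K..N}. 1 / real s)"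
proof (cases "K \<le> Suc N")
  case True
  have "{K..N} = {K..<Suc N}" by auto
  then show ?thesis using harm_lower_aux[OF assms True] by (simp add: add.commute)
next
  case False
  then have "ln (real N + 1) \<le> ln (real K)" using assms by simp
  moreover have "(\<Sum>s\<in>{K..N}. 1 / real s) \<ge> 0" by (simp add: sum_nonneg)
  ultimately show ?thesis by linarith
qed

lemma sq_tail_aux:
  assumes "1 \<le> K" "K \<le> N"
  shows "(\<Sum>t\<in>{K..<N}. 1 / (real t)^2) \<le> 2 / real K - 2 / real N"
  using assms(2)
proof (induction N rule: dec_induct)
  case base
  then show ?case by simp
next
  case (step n)
  have n: "1 \<le> real n" using step assms by simp
  have "1 / (real n)^2 \<le> 2 / real n - 2 / real (Suc n)"
  proof -
    have "2 / real n - 2 / real (Suc n) = 2 / (real n * (real n + 1))" using n by (simp add: field_simps)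
    moreover have "real n * (real n + 1) \<le> 2 * (real n)^2" using n by (simp add: power2_eq_square algebra_simps)
    then have "1 / (real n)^2 \<le> 2 / (real n * (real n + 1))" using n by (simp add: divide_simps power2_eq_square)
    ultimately show ?thesis by simp
  qed
  then show ?case using step by (simp add: atLeastLessThanSuc)
qed

lemma sq_tail:
  assumes "1 \<le> K"
  shows "(\<Sum>t\<in>{K..<N}. 1 / (real t)^2) \<le> 2 / real K"
proof (cases "K \<le> N")
  case True
  have "2 / real N \<ge> 0" by simp
  then show ?thesis using sq_tail_aux[OF assms True] by linarith
next
  case False
  then show ?thesis by simp
qed

lemma sum_rev_shift: "(\<Sum>t<N. g (N - t)) = (\<Sum>s\<in>{1..N}. g s)" for N :: nat
proof (induction N)
  case 0
  then show ?case by simp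
next
  case (Suc N)
  have "(\<Sum>t<Suc N. g (Suc N - t)) = g (Suc N) + (\<Sum>t<N. g (Suc N - Suc t))"
    by (subst sum.lessThan_Suc_shift) simp
  also have "(\<Sum>t<N. g (Suc N - Suc t)) = (\<Sum>s\<in>{1..N}. g s)" using Suc by simp
  also have "{1..Suc N} = insert (Suc N) {1..N}" by auto
  then have "(\<Sum>s\<in>{1..Suc N}. g s) = g (Suc N) + (\<Sum>s\<in>{1..N}. g s)" by simp
  finally show ?case by simp
qed

lemma PQ_pow_bound:
  assumes n: "1 \<le> n" and m: "1 \<le> m" and j: "j \<in> {1..m}" and s: "1 \<le> s" "s \<le> m*n"
  shows "PQ m n j (m*n - s) \<le> min 1 (real s ^ j / real n ^ (j - 1))"
proof -
  have jN: "j \<le> m*n" using j n by (metis atLeastAtMost_iff le_trans mult_le_mono2 mult.right_neutral)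
  have "PQ m n j (m*n - s) \<le> real n * e1 m n j (m*n - (m*n - s))" by (rule PQ_up[OF jN]) simp
  also have "m*n - (m*n - s) = s" using s by simp
  also have "e1 m n j s = real (m choose j) * (real (s choose j) / real (m*n choose j))"
    unfolding e1_def by simp
  also have "\<dots> \<le> real (m ^ j) * (real s / real (m*n))^j"
  proof (rule mult_mono)
    show "real (m choose j) \<le> real (m ^ j)" using binomial_le_pow[of j m] j by (simp only: of_nat_le_iff) simp
    show "real (s choose j) / real (m*n choose j) \<le> (real s / real (m*n))^j" by (rule binom_ratio_le[OF s(2)])
  qed auto
  also have "real (m ^ j) * (real s / real (m*n))^j = (real s / real n)^j"
    using m n by (simp add: power_divide power_mult_distrib field_simps)
  finally have h: "PQ m n j (m*n - s) \<le> real n * (real s / real n)^j" using n by (simp add: mult_left_mono)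
  have "real n * (real s / real n)^j = real s ^ j / real n ^ (j - 1)"
  proof -
    have "real n ^ j = real n * real n ^ (j - 1)" using j by (metis Suc_diff_1 atLeastAtMost_iff le_trans less_eq_Suc_le power_Suc zero_less_one)
    then show ?thesis using n by (simp add: power_divide)
  qed
  then show ?thesis using h PQ_le1 by simp
qed

lemma rpow_j:
  assumes n: "1 \<le> n" and j: "1 \<le> j"
  shows "(real n powr (1 - 1 / real j)) ^ j = real n ^ (j - 1)"
proof -
  have np: "real n > 0" using n by simp
  have "(real n powr (1 - 1 / real j)) ^ j = (real n powr (1 - 1 / real j)) powr (real j)"
    using np by (simp add: powr_realpow)
  also have "\<dots> = real n powr ((1 - 1 / real j) * real j)" by (simp add: powr_powr)
  also have "(1 - 1 / real j) * real j = real (j - 1)" using j by (simp add: field_simps of_nat_diff)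
  also have "real n powr real (j - 1) = real n ^ (j - 1)" using np by (simp add: powr_realpow)
  finally show ?thesis .
qed

lemma term_upper:
  assumes n: "1 \<le> n" and m: "1 \<le> m" and j: "1 \<le> j"
  shows "(\<Sum>s\<in>{1..m*n}. min 1 (real s ^ j / real n ^ (j - 1)) / real s) \<le> ln (real n) / real j + ln (real m) + 2"
proof -
  define r0 where "r0 = real n powr (1 - 1 / real j)"
  define K where "K = nat \<lfloor>r0\<rfloor>"
  define c where "c = real K ^ (j - 1) / real n ^ (j - 1)"
  have np: "real n > 0" using n by simp
  have r0ge: "r0 \<ge> 1" unfolding r0_def using n j by (intro ge_one_powr_ge_zero) (auto simp: field_simps)
  have fl: "1 \<le> \<lfloor>r0\<rfloor>" using r0ge by simp
  have rK: "real K = real_of_int \<lfloor>r0\<rfloor>" unfolding K_def using fl by simp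
  have "nat 1 \<le> nat \<lfloor>r0\<rfloor>" using fl by (rule nat_mono)
  then have K3: "1 \<le> K" by (simp add: K_def)
  have K1: "real K \<le> r0" "r0 < real K + 1" "1 \<le> K" unfolding rK using K3 by (auto simp: of_int_floor_le)
  have r0j: "r0 ^ j = real n ^ (j - 1)" unfolding r0_def by (rule rpow_j[OF n j])
  have f_le: "min 1 (real s ^ j / real n ^ (j - 1)) / real s \<le> (if s \<le> K then c else 1 / real s)"
    if s: "s \<in> {1..m*n}" for s
  proof (cases "s \<le> K")
    case True
    have sp: "real s > 0" using s by simp
    have "min 1 (real s ^ j / real n ^ (j - 1)) / real s \<le> (real s ^ j / real n ^ (j - 1)) / real s"
      using sp by (intro divide_right_mono) auto
    also have "\<dots> = real s ^ (j - 1) / real n ^ (j - 1)"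
    proof -
      have "real s ^ j = real s * real s ^ (j - 1)" using j by (metis Suc_diff_1 le_trans less_eq_Suc_le power_Suc zero_less_one)
      then show ?thesis using sp by simp
    qed
    also have "\<dots> \<le> c" unfolding c_def using True
      by (intro divide_right_mono power_mono) auto
    finally show ?thesis using True by simp
  next
    case False
    have "min 1 (real s ^ j / real n ^ (j - 1)) / real s \<le> 1 / real s"
      using s by (intro divide_right_mono) auto
    then show ?thesis using False by simp
  qed
  have "(\<Sum>s\<in>{1..m*n}. min 1 (real s ^ j / real n ^ (j - 1)) / real s) \<le> (\<Sum>s\<in>{1..m*n}. if s \<le> K then c else 1 / real s)"
    by (rule sum_mono) (rule f_le)
  also have "\<dots> = (\<Sum>s\<in>{1..m*n} \<inter> {s. s \<le> K}. c) + (\<Sum>s\<in>{1..m*n} \<inter> - {s. s \<le> K}. 1 / real s)"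
    by (rule sum.If_cases) simp
  also have "(\<Sum>s\<in>{1..m*n} \<inter> {s. s \<le> K}. c) \<le> 1"
  proof -
    have "card ({1..m*n} \<inter> {s. s \<le> K}) \<le> card {1..K}" by (intro card_mono) auto
    then have cK: "real (card ({1..m*n} \<inter> {s. s \<le> K})) \<le> real K" by simp
    have "(\<Sum>s\<in>{1..m*n} \<inter> {s. s \<le> K}. c) = real (card ({1..m*n} \<inter> {s. s \<le> K})) * c" by simp
    also have "\<dots> \<le> real K * c" using cK by (intro mult_right_mono) (auto simp: c_def)
    also have "real K * c = real K ^ j / real n ^ (j - 1)"
    proof -
      have "real K ^ j = real K * real K ^ (j - 1)" using j by (metis Suc_diff_1 le_trans less_eq_Suc_le power_Suc zero_less_one)
      then show ?thesis by (simp add: c_def)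
    qed
    also have "\<dots> \<le> r0 ^ j / real n ^ (j - 1)" using K1 by (intro divide_right_mono power_mono) auto
    also have "\<dots> = 1" using r0j np by simp
    finally show ?thesis .
  qed
  also have "(\<Sum>s\<in>{1..m*n} \<inter> - {s. s \<le> K}. 1 / real s) \<le> ln (real m) + ln (real n) / real j + ln 2"
  proof -
    have set: "{1..m*n} \<inter> - {s. s \<le> K} = {K<..m*n}" using K1 by auto
    have bnd: "ln (real (m*n)) - ln (real K) \<le> ln (real m) + ln (real n) / real j + ln 2"
    proof -
      have "r0 / 2 < real K" using K1 by linarith
      then have "ln (r0 / 2) \<le> ln (real K)" using r0ge by (subst ln_le_cancel_iff) auto
      moreover have "ln (r0 / 2) = (1 - 1 / real j) * ln (real n) - ln 2" unfolding r0_def using np by (simp add: ln_div)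
      moreover have "ln (real (m*n)) = ln (real m) + ln (real n)" using m n by (simp add: ln_mult)
      ultimately show ?thesis by (simp add: algebra_simps diff_divide_distrib)
    qed
    show ?thesis
    proof (cases "K \<le> m*n")
      case True
      then show ?thesis unfolding set using harm_upper[OF K1(3) True] bnd by linarith
    next
      case False
      then have "{K<..m*n} = {}" by auto
      moreover have "0 \<le> ln (real m) + ln (real n) / real j + ln 2" using m n by (simp add: add_nonneg_nonneg)
      ultimately show ?thesis unfolding set by simp
    qed
  qed
  finally show ?thesis using ln_2_less_1 by linarith
qed

lemma B_split:
  "B m n = (\<Sum>j\<in>{1..m}. \<Sum>s\<in>{1..m*n}. PQ m n j (m*n - s) / real s)"
proof -
  have "B m n = (\<Sum>t<m*n. \<Sum>j\<in>{1..m}. PQ m n j t / real (m*n - t))"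
    unfolding B_def by (simp add: sum_divide_distrib)
  also have "\<dots> = (\<Sum>j\<in>{1..m}. \<Sum>t<m*n. PQ m n j t / real (m*n - t))" by (rule sum.swap)
  also have "\<dots> = (\<Sum>j\<in>{1..m}. \<Sum>s\<in>{1..m*n}. PQ m n j (m*n - s) / real s)"
  proof (rule sum.cong[OF refl])
    fix j
    have "(\<Sum>t<m*n. PQ m n j t / real (m*n - t)) = (\<Sum>t<m*n. (\<lambda>s. PQ m n j (m*n - s) / real s) (m*n - t))"
      by (intro sum.cong refl) (simp add: diff_diff_cancel)
    also have "\<dots> = (\<Sum>s\<in>{1..m*n}. PQ m n j (m*n - s) / real s)" by (rule sum_rev_shift)
    finally show "(\<Sum>t<m*n. PQ m n j t / real (m*n - t)) = (\<Sum>s\<in>{1..m*n}. PQ m n j (m*n - s) / real s)" .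
  qed
  finally show ?thesis .
qed

lemma B_upper:
  assumes n: "1 \<le> n" and m: "1 \<le> m"
  shows "B m n \<le> harm m * ln (real n) + real m * (ln (real m) + 2)"
proof -
  have "B m n \<le> (\<Sum>j\<in>{1..m}. ln (real n) / real j + ln (real m) + 2)"
    unfolding B_split
  proof (rule sum_mono)
    fix j assume j: "j \<in> {1..m}"
    have "(\<Sum>s\<in>{1..m*n}. PQ m n j (m*n - s) / real s) \<le> (\<Sum>s\<in>{1..m*n}. min 1 (real s ^ j / real n ^ (j - 1)) / real s)"
      by (intro sum_mono divide_right_mono PQ_pow_bound[OF n m j]) auto
    also have "\<dots> \<le> ln (real n) / real j + ln (real m) + 2" by (rule term_upper[OF n m]) (use j in auto)
    finally show "(\<Sum>s\<in>{1..m*n}. PQ m n j (m*n - s) / real s) \<le> ln (real n) / real j + ln (real m) + 2" .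
  qed
  also have "\<dots> = harm m * ln (real n) + real m * (ln (real m) + 2)"
  proof -
    have "(\<Sum>j\<in>{1..m}. ln (real n) / real j) = harm m * ln (real n)"
      unfolding harm_def sum_distrib_right by (simp add: divide_inverse mult.commute)
    then show ?thesis by (simp add: sum.distrib algebra_simps)
  qed
  finally show ?thesis .
qed

lemma term_lower:
  assumes n: "1 \<le> n" and m: "1 \<le> m" and j: "j \<in> {1..m}" and L1: "1 \<le> ln (real n)" and L2: "2 * real m \<le> ln (real n)"
  shows "ln (real n) / real j - ln (ln (real n)) - (ln 2 + 2 * real m + 2 * real m * (1 + ln (real m)))
     \<le> (\<Sum>s\<in>{1..m*n}. PQ m n j (m*n - s) / real s)"
proof -
  define L where "L = ln (real n)"
  define r0 where "r0 = real n powr (1 - 1 / real j)"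
  define r where "r = r0 * L"
  define K where "K = nat \<lceil>r\<rceil>"
  define \<delta> where "\<delta> = 2 * real m / L"
  define N where "N = m * n"
  have j1: "1 \<le> j" and jm: "j \<le> m" using j by auto
  have np: "real n > 0" using n by simp
  have Lp: "L \<ge> 1" "2 * real m \<le> L" using L1 L2 by (auto simp: L_def)
  have r0ge: "r0 \<ge> 1" unfolding r0_def using n j1 by (intro ge_one_powr_ge_zero) (auto simp: field_simps)
  have rL: "r \<ge> L" unfolding r_def using r0ge Lp by (simp add: mult_le_cancel_right1)
  have rK: "real K = real_of_int \<lceil>r\<rceil>" unfolding K_def using rL Lp by simp
  have K1: "r \<le> real K" "real K < r + 1" unfolding rK using ceiling_correct[of r] by auto
  have K2j: "2 * j \<le> K"
  proof -
    have "real (2 * j) \<le> real K" using K1 rL Lp jm by simp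
    then show ?thesis by (simp only: of_nat_le_iff)
  qed
  have Kge1: "1 \<le> K" using K2j j1 by simp
  have rj: "r ^ j = real n ^ (j - 1) * L ^ j" unfolding r_def r0_def by (simp add: power_mult_distrib rpow_j[OF n j1])
  have nn: "real n * real n ^ (j - 1) = real n ^ j" using j1 by (metis Suc_diff_1 le_trans less_eq_Suc_le power_Suc zero_less_one)
  have key: "PQ m n j (N - s) \<ge> 1 - \<delta>" if s: "s \<in> {K..N}" for s
  proof -
    have sK: "K \<le> s" "s \<le> N" using s by auto
    have s2j: "2 * j \<le> s" using sK K2j by simp
    have "PQ m n j (N - s) \<ge> 1 - real (m*n choose j) / (real n * real ((m*n - (N - s)) choose j))"
      by (rule PQ_low[OF j1 jm _ n]) (use sK s2j in \<open>auto simp: N_def\<close>)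
    moreover have "m*n - (N - s) = s" using sK by (simp add: N_def)
    ultimately have h: "PQ m n j (N - s) \<ge> 1 - real (N choose j) / (real n * real (s choose j))"
      by (simp add: N_def)
    have Cs: "real (s choose j) > 0" using s2j by simp
    have CN: "real (N choose j) > 0" using s2j sK by simp
    define \<rho> where "\<rho> = real (s choose j) / real (N choose j)"
    have "(real s / (2 * real N))^j \<le> \<rho>" unfolding \<rho>_def by (rule binom_ratio_ge[OF s2j sK(2)])
    moreover have "(r / (2 * real N))^j \<le> (real s / (2 * real N))^j"
      using K1 sK rL Lp by (intro power_mono divide_right_mono) auto
    ultimately have "real n * (r / (2 * real N))^j \<le> real n * \<rho>" using np by simp
    moreover have "real n * (r / (2 * real N))^j = (L / (2 * real m))^j"
    proof -
      have "real n * (r / (2 * real N))^j = real n * r^j / (2 * real N)^j" by (simp add: power_divide)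
      also have "\<dots> = real n ^ j * L ^ j / ((2 * real m)^j * real n ^ j)"
        unfolding rj N_def using nn by (simp add: power_mult_distrib mult.assoc[symmetric])
      also have "\<dots> = (L / (2 * real m))^j" using np by (simp add: power_divide)
      finally show ?thesis .
    qed
    moreover have "(L / (2 * real m))^j \<ge> L / (2 * real m)"
    proof -
      have "1 \<le> L / (2 * real m)" using Lp m by simp
      then show ?thesis using j1 by (metis power_increasing power_one_right)
    qed
    ultimately have nr: "real n * \<rho> \<ge> L / (2 * real m)" by linarith
    have Lm: "L / (2 * real m) > 0" using Lp m by simp
    have pos: "0 < real n * \<rho> * (L / (2 * real m))" by (rule mult_pos_pos) (use nr Lm in linarith)+
    have "real (N choose j) / (real n * real (s choose j)) = 1 / (real n * \<rho>)"
      unfolding \<rho>_def using CN Cs np by (simp add: field_simps)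
    also have "\<dots> \<le> 1 / (L / (2 * real m))" by (rule divide_left_mono[OF nr _ pos]) simp
    also have "\<dots> = \<delta>" unfolding \<delta>_def by simp
    finally show ?thesis using h by linarith
  qed
  define H where "H = (\<Sum>s\<in>{K..N}. 1 / real s)"
  have H_low: "ln (real N + 1) - ln (real K) \<le> H" unfolding H_def by (rule harm_lower[OF Kge1])
  have H_up: "H \<le> 1 + ln (real N)"
  proof -
    have N1: "1 \<le> N" using n m by (simp add: N_def)
    have "H \<le> (\<Sum>s\<in>{1..N}. 1 / real s)" unfolding H_def using Kge1 by (intro sum_mono2) auto
    also have "{1..N} = insert 1 {1<..N}" using N1 by auto
    then have "(\<Sum>s\<in>{1..N}. 1 / real s) = 1 + (\<Sum>s\<in>{1<..N}. 1 / real s)" by simp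
    also have "(\<Sum>s\<in>{1<..N}. 1 / real s) \<le> ln (real N) - ln 1" using harm_upper[OF _ N1] by simp
    finally show ?thesis by simp
  qed
  have H_nn: "H \<ge> 0" unfolding H_def by (simp add: sum_nonneg)
  have dp: "\<delta> \<ge> 0" unfolding \<delta>_def using Lp by simp
  have "(\<Sum>s\<in>{1..N}. PQ m n j (N - s) / real s) \<ge> (\<Sum>s\<in>{K..N}. PQ m n j (N - s) / real s)"
    using Kge1 by (intro sum_mono2) (auto simp: PQ_nonneg)
  moreover have "(\<Sum>s\<in>{K..N}. PQ m n j (N - s) / real s) \<ge> (\<Sum>s\<in>{K..N}. (1 - \<delta>) / real s)"
    using key by (intro sum_mono divide_right_mono) auto
  moreover have "(\<Sum>s\<in>{K..N}. (1 - \<delta>) / real s) = H - \<delta> * H"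
    unfolding H_def by (simp add: sum_distrib_left[symmetric] divide_inverse algebra_simps sum_subtractf)
  moreover have "\<delta> * H \<le> \<delta> * (1 + ln (real N))" by (rule mult_left_mono[OF H_up dp])
  moreover have "\<delta> * (1 + ln (real N)) \<le> 2 * real m * (1 + ln (real m)) + 2 * real m"
  proof -
    have lnN: "ln (real N) = ln (real m) + L" unfolding N_def L_def using m n by (simp add: ln_mult)
    have "\<delta> * (1 + ln (real N)) = 2 * real m * (1 + ln (real m)) / L + 2 * real m"
      unfolding \<delta>_def lnN using Lp by (simp add: field_simps)
    moreover have "2 * real m * (1 + ln (real m)) / L \<le> 2 * real m * (1 + ln (real m))"
    proof -
      have "0 \<le> 2 * real m * (1 + ln (real m))" using m by simp
      then show ?thesis using Lp by (simp add: divide_le_eq mult_le_cancel_left1)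
    qed
    ultimately show ?thesis by simp
  qed
  moreover have "ln (real N + 1) \<ge> L"
  proof -
    have "n \<le> N" using m by (simp add: N_def)
    then have "real n \<le> real N" by (simp only: of_nat_le_iff)
    then have "real n \<le> real N + 1" by linarith
    then show ?thesis unfolding L_def using np by simp
  qed
  moreover have "ln (real K) \<le> ln 2 + (1 - 1 / real j) * L + ln L"
  proof -
    have "real K \<le> 2 * r" using K1 rL Lp by linarith
    then have "ln (real K) \<le> ln (2 * r)" using Kge1 by simp
    also have "ln (2 * r) = ln 2 + ln r0 + ln L" unfolding r_def using r0ge Lp by (simp add: ln_mult)
    also have "ln r0 = (1 - 1 / real j) * L" unfolding r0_def L_def using np by simp
    finally show ?thesis .
  qed
  ultimately have "(\<Sum>s\<in>{1..N}. PQ m n j (N - s) / real s) \<ge>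
      L - (ln 2 + (1 - 1 / real j) * L + ln L) - (2 * real m * (1 + ln (real m)) + 2 * real m)"
    using H_low by linarith
  moreover have "L - (ln 2 + (1 - 1 / real j) * L + ln L) - (2 * real m * (1 + ln (real m)) + 2 * real m)
      = L / real j - ln L - (ln 2 + 2 * real m + 2 * real m * (1 + ln (real m)))"
    by (simp add: algebra_simps)
  ultimately show ?thesis unfolding L_def N_def by simp
qed

lemma B_lower:
  assumes n: "1 \<le> n" and m: "1 \<le> m" and L1: "1 \<le> ln (real n)" and L2: "2 * real m \<le> ln (real n)"
  shows "harm m * ln (real n) - real m * ln (ln (real n)) - real m * (ln 2 + 2 * real m + 2 * real m * (1 + ln (real m))) \<le> B m n"
proof -
  define C where "C = ln 2 + 2 * real m + 2 * real m * (1 + ln (real m))"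
  have "(\<Sum>j\<in>{1..m}. ln (real n) / real j - ln (ln (real n)) - C) \<le> B m n"
    unfolding B_split C_def by (rule sum_mono) (rule term_lower[OF n m _ L1 L2])
  moreover have "(\<Sum>j\<in>{1..m}. ln (real n) / real j - ln (ln (real n)) - C)
      = harm m * ln (real n) - real m * ln (ln (real n)) - real m * C"
  proof -
    have "(\<Sum>j\<in>{1..m}. ln (real n) / real j) = harm m * ln (real n)"
      unfolding harm_def sum_distrib_right by (simp add: divide_inverse mult.commute)
    then show ?thesis by (simp add: sum_subtractf)
  qed
  ultimately show ?thesis unfolding C_def by simp
qed

lemma powr_neg_le1:
  assumes "1 \<le> (x::real)" "0 \<le> a"
  shows "x powr (- a) \<le> 1" "0 < x powr (- a)"
proof -
  have "x powr (- a) \<le> x powr 0" using assms by (intro powr_mono) auto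
  then show "x powr (- a) \<le> 1" using assms by simp
  show "0 < x powr (- a)" using assms by simp
qed

lemma Cminus_low_bound:
  assumes n: "1 \<le> n" and m: "1 \<le> m"
  shows "real n powr (- 1 / real m) / 8 \<le> Cminus m n"
proof -
  define N where "N = m * n"
  define a where "a = (2 * real n) powr (- 1 / real m)"
  define x where "x = real N * a"
  define T0 where "T0 = nat \<lfloor>x\<rfloor>"
  have np: "real n > 0" using n by simp
  have "n \<le> N" using m by (simp add: N_def)
  then have Nn: "real n \<le> real N" by (simp only: of_nat_le_iff)
  have a01: "a \<le> 1" "0 < a" unfolding a_def using powr_neg_le1[of "2 * real n" "1 / real m"] n by auto
  have x0: "0 \<le> x" "x \<le> real N" unfolding x_def using a01 by (auto intro: mult_left_le)
  have rT0: "real T0 = real_of_int \<lfloor>x\<rfloor>" unfolding T0_def using x0 by simp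
  have T0x: "real T0 \<le> x" "x < real T0 + 1" unfolding rT0 using floor_correct[of x] by auto
  have "real T0 \<le> real N" using T0x x0 by linarith
  then have T0N: "T0 \<le> N" by (simp only: of_nat_le_iff)
  have am: "a ^ m = 1 / (2 * real n)"
  proof -
    have "a ^ m = a powr (real m)" using a01 by (simp add: powr_realpow)
    also have "\<dots> = (2 * real n) powr (- 1 / real m * real m)" unfolding a_def by (simp add: powr_powr)
    also have "- 1 / real m * real m = - 1" using m by simp
    finally show ?thesis using np by (simp add: powr_minus_divide)
  qed
  have PAh: "PA m n t \<ge> 1 / 2" if t: "t < T0" for t
  proof -
    have tN: "t \<le> m*n" using t T0N by (simp add: N_def)
    have mN: "m \<le> m*n" using n by simp
    have "PA m n t \<ge> 1 - real n * e1 m n m t" by (rule PA_low[OF tN mN])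
    moreover have "e1 m n m t \<le> 1 / (2 * real n)"
    proof -
      have "e1 m n m t = real (t choose m) / real (N choose m)" unfolding e1_def N_def by simp
      also have "\<dots> \<le> (real t / real N)^m" using binom_ratio_le[of t N m] tN by (simp add: N_def)
      also have "\<dots> \<le> (x / real N)^m"
        using T0x t by (intro power_mono divide_right_mono) auto
      also have "x / real N = a" unfolding x_def using Nn np by simp
      finally show ?thesis using am by simp
    qed
    then have "real n * e1 m n m t \<le> 1 / 2" using np by (simp add: field_simps)
    ultimately show ?thesis by linarith
  qed
  have "real T0 / 2 \<le> (\<Sum>t<N. PA m n t)"
  proof -
    have "real T0 / 2 = (\<Sum>t<T0. 1 / 2)" by simp
    also have "\<dots> \<le> (\<Sum>t<T0. PA m n t)" by (rule sum_mono) (use PAh in auto)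
    also have "\<dots> \<le> (\<Sum>t<N. PA m n t)" using T0N by (intro sum_mono2) (auto simp: PA_nonneg)
    finally show ?thesis .
  qed
  moreover have "(x - 1) / 2 \<le> real T0 / 2" using T0x by (intro divide_right_mono) auto
  ultimately have S1: "(x - 1) / 2 \<le> (\<Sum>t<N. PA m n t)" by (rule order_trans[rotated])
  have "(x - 1) / 2 / real N \<le> (\<Sum>t<N. PA m n t) / real N" by (rule divide_right_mono[OF S1]) simp
  moreover have "(\<Sum>t<N. PA m n t) / real N \<le> Cminus m n" using Cminus_lower(2)[OF n m] by (simp add: N_def)
  ultimately have c2: "(x - 1) / 2 / real N \<le> Cminus m n" by linarith
  have c1: "1 / real n \<le> Cminus m n" by (rule Cminus_lower(1)[OF n m])
  define u where "u = 1 / real n"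
  define v where "v = 1 / real N"
  have e2: "(x - 1) / 2 / real N = a / 2 - v / 2" unfolding x_def v_def using Nn np by (simp add: field_simps)
  have vu: "v \<le> u" unfolding u_def v_def using Nn np by (simp add: frac_le)
  have u0: "0 \<le> u" unfolding u_def by simp
  have c1': "u \<le> Cminus m n" using c1 unfolding u_def .
  have c2': "a / 2 - v / 2 \<le> Cminus m n" using c2 unfolding e2 .
  have a4: "a / 4 \<le> Cminus m n" using c1' c2' vu u0 by linarith
  have "real n powr (- 1 / real m) / 8 \<le> a / 4"
  proof -
    have ea: "a = 2 powr (- 1 / real m) * real n powr (- 1 / real m)" unfolding a_def by (simp add: powr_mult)
    have "2 powr (- 1) \<le> 2 powr (- 1 / real m)" using m by (intro powr_mono) (auto simp: field_simps)
    then have p2: "1 / 2 \<le> 2 powr (- 1 / real m)" by (simp add: powr_minus_divide)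
    have q: "0 \<le> real n powr (- 1 / real m)" by simp
    have "1 / 2 * real n powr (- 1 / real m) \<le> 2 powr (- 1 / real m) * real n powr (- 1 / real m)"
      by (rule mult_right_mono[OF p2 q])
    then show ?thesis unfolding ea by simp
  qed
  then show ?thesis using a4 by linarith
qed

lemma S_bound:
  assumes n: "1 \<le> n" and m: "2 \<le> m"
  shows "(\<Sum>t<m*n. PA m n t) \<le> 6 * real m * real n powr (1 - 1 / real m) + 1"
proof -
  define N where "N = m * n"
  define r0 where "r0 = real n powr (1 - 1 / real m)"
  define T where "T = 2 * real m * r0"
  define K where "K = nat \<lceil>T\<rceil>"
  have np: "real n > 0" using n by simp
  have m1: "1 \<le> m" using m by simp
  have r0ge: "r0 \<ge> 1" unfolding r0_def using n m1 by (intro ge_one_powr_ge_zero) (auto simp: field_simps)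
  have T2m: "T \<ge> 2 * real m" unfolding T_def using r0ge m by simp
  have rK: "real K = real_of_int \<lceil>T\<rceil>" unfolding K_def using T2m by simp
  have K1: "T \<le> real K" "real K < T + 1" unfolding rK using ceiling_correct[of T] by auto
  have K2m: "2 * m \<le> K"
  proof -
    have "real (2 * m) \<le> real K" using K1 T2m by simp
    then show ?thesis by (simp only: of_nat_le_iff)
  qed
  have Kge1: "1 \<le> K" using K2m m by linarith
  have Tpos: "T > 0" using T2m m by simp
  have Tm: "T ^ m = (2 * real m) ^ m * real n ^ (m - 1)" unfolding T_def r0_def by (simp add: power_mult_distrib rpow_j[OF n m1])
  have nn: "real n * real n ^ (m - 1) = real n ^ m" using m1 by (metis Suc_diff_1 le_trans less_eq_Suc_le power_Suc zero_less_one)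
  have PAb: "PA m n t \<le> (if t < K then 1 else T^2 / (real t)^2)" if t: "t \<in> {..<N}" for t
  proof (cases "t < K")
    case True
    then show ?thesis using PA_le1 by simp
  next
    case False
    then have tK: "K \<le> t" by simp
    have t2m: "2 * m \<le> t" using tK K2m by simp
    have tN: "t \<le> m * n" using t by (simp add: N_def)
    have Ct: "real (t choose m) > 0" using t2m by simp
    have CN: "real (N choose m) > 0" using t2m tN n by (simp add: N_def)
    have "real K \<le> real t" using tK by simp
    then have tT: "T \<le> real t" using K1 by linarith
    have tp: "real t > 0" using tT Tpos by linarith
    have h: "PA m n t \<le> real (m*n choose m) / (real n * real (t choose m))" by (rule PA_up[OF t2m tN m1 n])
    define \<rho> where "\<rho> = real (t choose m) / real (N choose m)"
    have "(real t / (2 * real N))^m \<le> \<rho>" unfolding \<rho>_def by (rule binom_ratio_ge[OF t2m]) (use tN in \<open>simp add: N_def\<close>)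
    then have "real n * (real t / (2 * real N))^m \<le> real n * \<rho>" using np by simp
    moreover have "real n * (real t / (2 * real N))^m = (real t / T)^m"
    proof -
      have "real n * (real t / (2 * real N))^m = real n * real t ^ m / ((2 * real m)^m * real n ^ m)"
        unfolding N_def by (simp add: power_divide power_mult_distrib)
      also have "\<dots> = real t ^ m / ((2 * real m)^m * real n ^ (m - 1))"
        unfolding nn[symmetric] using np by (simp add: field_simps)
      also have "\<dots> = real t ^ m / T ^ m" by (simp only: Tm)
      also have "\<dots> = (real t / T)^m" by (simp add: power_divide)
      finally show ?thesis .
    qed
    moreover have "(real t / T)^m \<ge> 1" using tT Tpos by (simp add: one_le_power)
    ultimately have nr: "real n * \<rho> \<ge> (real t / T)^m" "real n * \<rho> \<ge> 1" by linarith+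
    have "real (m*n choose m) / (real n * real (t choose m)) = 1 / (real n * \<rho>)"
      unfolding \<rho>_def N_def using CN Ct np by (simp add: field_simps N_def)
    also have "\<dots> \<le> 1 / (real t / T)^m"
    proof (rule divide_left_mono[OF nr(1)])
      show "0 < real n * \<rho> * (real t / T) ^ m"
      proof (rule mult_pos_pos)
        show "0 < real n * \<rho>" using nr(2) by linarith
        show "0 < (real t / T) ^ m" using tp Tpos by simp
      qed
    qed simp
    also have "\<dots> = (T / real t)^m" by (simp add: power_divide)
    also have "\<dots> \<le> (T / real t)^2"
      using tT Tpos tp m by (intro power_decreasing) (auto simp: divide_le_eq_1)
    also have "\<dots> = T^2 / (real t)^2" by (simp add: power_divide)
    finally show ?thesis using h False by simp
  qed
  have "(\<Sum>t<N. PA m n t) \<le> (\<Sum>t<N. if t < K then 1 else T^2 / (real t)^2)"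
    by (rule sum_mono) (rule PAb)
  also have "\<dots> = (\<Sum>t\<in>{..<N} \<inter> {t. t < K}. 1) + (\<Sum>t\<in>{..<N} \<inter> - {t. t < K}. T^2 / (real t)^2)"
    by (rule sum.If_cases) simp
  also have "(\<Sum>t\<in>{..<N} \<inter> {t. t < K}. (1::real)) \<le> T + 1"
  proof -
    have "card ({..<N} \<inter> {t. t < K}) \<le> card {..<K}" by (intro card_mono) auto
    then have "real (card ({..<N} \<inter> {t. t < K})) \<le> real K" by simp
    then show ?thesis using K1 by simp
  qed
  also have "(\<Sum>t\<in>{..<N} \<inter> - {t. t < K}. T^2 / (real t)^2) \<le> 2 * T"
  proof -
    have "{..<N} \<inter> - {t. t < K} = {K..<N}" by auto
    then have "(\<Sum>t\<in>{..<N} \<inter> - {t. t < K}. T^2 / (real t)^2) = T^2 * (\<Sum>t\<in>{K..<N}. 1 / (real t)^2)"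
      by (simp add: sum_distrib_left)
    also have "\<dots> \<le> T^2 * (2 / real K)" by (intro mult_left_mono sq_tail[OF Kge1]) simp
    also have "\<dots> \<le> T^2 * (2 / T)" using K1 Tpos by (intro mult_left_mono divide_left_mono) auto
    also have "\<dots> = 2 * T" using Tpos by (simp add: power2_eq_square)
    finally show ?thesis .
  qed
  finally have "(\<Sum>t<N. PA m n t) \<le> 3 * T + 1" by simp
  then show ?thesis unfolding T_def r0_def N_def by simp
qed

lemma Cminus_up_bound:
  assumes n: "1 \<le> n" and m: "1 \<le> m"
  shows "Cminus m n \<le> (6 * real m + 1) * real n powr (- 1 / real m)"
proof -
  have np: "real n > 0" using n by simp
  have inv: "1 / real n \<le> real n powr (- 1 / real m)"
  proof -
    have "real n powr (- 1) \<le> real n powr (- 1 / real m)" using m n by (intro powr_mono) (auto simp: field_simps)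
    then show ?thesis using np by (simp add: powr_minus_divide)
  qed
  have q0: "0 \<le> real n powr (- 1 / real m)" by simp
  have C: "Cminus m n \<le> (\<Sum>t<m*n. PA m n t) / real n" by (rule Cminus_upper[OF n m])
  show ?thesis
  proof (cases "m = 1")
    case True
    have "(\<Sum>t<m*n. PA m n t) \<le> (\<Sum>t<m*n. if t = 0 then 1 else 0)"
    proof (rule sum_mono)
      fix t assume t: "t \<in> {..<m*n}"
      show "PA m n t \<le> (if t = 0 then 1 else 0)"
      proof (cases "t = 0")
        case True then show ?thesis using PA_le1 by simp
      next
        case False then show ?thesis using PA_m1[of t n] t \<open>m = 1\<close> by simp
      qed
    qed
    also have "\<dots> \<le> 1" using n True by (simp add: sum.delta)
    finally have "(\<Sum>t<m*n. PA m n t) / real n \<le> 1 / real n" using np by (simp add: divide_right_mono)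
    then have "Cminus m n \<le> real n powr (- 1 / real m)" using C inv by linarith
    moreover have "real n powr (- 1 / real m) \<le> (6 * real m + 1) * real n powr (- 1 / real m)"
      using q0 m by (simp add: mult_le_cancel_right1)
    ultimately show ?thesis by linarith
  next
    case False
    then have m2: "2 \<le> m" using m by simp
    have "(\<Sum>t<m*n. PA m n t) / real n \<le> (6 * real m * real n powr (1 - 1 / real m) + 1) / real n"
      using S_bound[OF n m2] np by (simp add: divide_right_mono)
    also have "\<dots> = 6 * real m * (real n powr (1 - 1 / real m) / real n) + 1 / real n"
      by (simp add: add_divide_distrib)
    also have "real n powr (1 - 1 / real m) / real n = real n powr (- 1 / real m)"
    proof -
      have "real n powr (1 - 1 / real m) / real n = real n powr (1 - 1 / real m) / real n powr 1" using np by simp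
      also have "\<dots> = real n powr (1 - 1 / real m - 1)" by (simp only: powr_diff)
      also have "1 - 1 / real m - 1 = - 1 / real m" by simp
      finally show ?thesis .
    qed
    finally have "(\<Sum>t<m*n. PA m n t) / real n \<le> 6 * real m * real n powr (- 1 / real m) + 1 / real n" .
    then show ?thesis using C inv by (simp add: algebra_simps)
  qed
qed

lemma Cplus_asymp:
  fixes m :: nat
  assumes m: "m \<ge> 1"
  shows "(\<lambda>n. Cplus m n) \<sim>[at_top] (\<lambda>n. harm m * ln (real n))"
proof (rule asymp_equivI')
  define H where "H = (harm m :: real)"
  define C1 where "C1 = real m * (ln (real m) + 2)"
  define C2 where "C2 = real m * (ln 2 + 2 * real m + 2 * real m * (1 + ln (real m)))"
  have Hp: "H > 0" unfolding H_def using m by simp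
  have lnlim: "filterlim (\<lambda>n::nat. ln (real n)) at_top at_top"
    using filterlim_compose[OF ln_at_top filterlim_real_sequentially] by simp
  have l1: "((\<lambda>n::nat. ln (ln (real n)) / ln (real n)) \<longlongrightarrow> 0) at_top"
    using filterlim_compose[OF ln_x_over_x_tendsto_0 lnlim] by simp
  have l2: "((\<lambda>n::nat. 1 / ln (real n)) \<longlongrightarrow> 0) at_top"
    by (rule tendsto_divide_0[OF tendsto_const filterlim_at_top_imp_at_infinity[OF lnlim]])
  define lo where "lo n = 1 - (real m / H * (ln (ln (real n)) / ln (real n)) + C2 / H * (1 / ln (real n)))" for n :: nat
  define up where "up n = 1 + C1 / H * (1 / ln (real n))" for n :: nat
  have lo_lim: "(lo \<longlongrightarrow> 1) at_top"
  proof -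
    have "((\<lambda>n. 1 - (real m / H * (ln (ln (real n)) / ln (real n)) + C2 / H * (1 / ln (real n)))) \<longlongrightarrow> 1 - (real m / H * 0 + C2 / H * 0)) at_top"
      by (intro tendsto_intros l1 l2)
    then show ?thesis unfolding lo_def by simp
  qed
  have up_lim: "(up \<longlongrightarrow> 1) at_top"
  proof -
    have "((\<lambda>n. 1 + C1 / H * (1 / ln (real n))) \<longlongrightarrow> 1 + C1 / H * 0) at_top"
      by (intro tendsto_intros l2)
    then show ?thesis unfolding up_def by simp
  qed
  have ev: "eventually (\<lambda>n::nat. max 1 (2 * real m) \<le> ln (real n)) at_top"
    using lnlim unfolding filterlim_at_top by blast
  have ev1: "eventually (\<lambda>n::nat. 1 \<le> n) at_top" by (rule eventually_ge_at_top)
  have bounds: "eventually (\<lambda>n. lo n \<le> Cplus m n / (harm m * ln (real n)) \<and> Cplus m n / (harm m * ln (real n)) \<le> up n) at_top"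
    using ev ev1
  proof eventually_elim
    case (elim n)
    have n: "1 \<le> n" using elim by simp
    have L1: "1 \<le> ln (real n)" "2 * real m \<le> ln (real n)" using elim by auto
    define L where "L = ln (real n)"
    have Lp: "L > 0" using L1 by (simp add: L_def)
    have HL: "H * L > 0" using Hp Lp by simp
    have CB: "Cplus m n = B m n" by (rule Cplus_eq_B[OF n])
    have upper: "Cplus m n \<le> H * L + C1" unfolding CB H_def L_def C1_def using B_upper[OF n m] by (simp add: mult.commute)
    have lower: "H * L - real m * ln L - C2 \<le> Cplus m n" unfolding CB H_def L_def C2_def using B_lower[OF n m L1] by (simp add: mult.commute)
    have e1: "up n = (H * L + C1) / (H * L)" unfolding up_def L_def[symmetric] using HL Hp Lp by (simp add: field_simps)
    have e2: "lo n = (H * L - real m * ln L - C2) / (H * L)" unfolding lo_def L_def[symmetric] using HL Hp Lp by (simp add: field_simps)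
    have "Cplus m n / (H * L) \<le> up n" unfolding e1 using upper HL by (simp add: divide_right_mono)
    moreover have "lo n \<le> Cplus m n / (H * L)" unfolding e2 using lower HL by (simp add: divide_right_mono)
    ultimately show ?case unfolding H_def L_def by simp
  qed
  show "((\<lambda>n. Cplus m n / (harm m * ln (real n))) \<longlongrightarrow> 1) at_top"
    by (rule tendsto_sandwich[OF _ _ lo_lim up_lim]) (use bounds in \<open>auto elim: eventually_mono\<close>)
qed

lemma Cminus_theta:
  fixes m :: nat
  assumes m: "m \<ge> 1"
  shows "(\<lambda>n. Cminus m n) \<in> \<Theta>(\<lambda>n. real n powr (- 1 / real m))"
proof (rule bigthetaI)
  have ev1: "eventually (\<lambda>n::nat. 1 \<le> n) at_top" by (rule eventually_ge_at_top)
  show "(\<lambda>n. Cminus m n) \<in> O(\<lambda>n. real n powr (- 1 / real m))"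
  proof (rule bigoI)
    show "eventually (\<lambda>n. norm (Cminus m n) \<le> (6 * real m + 1) * norm (real n powr (- 1 / real m))) at_top"
      using ev1
    proof eventually_elim
      case (elim n)
      have lo: "real n powr (- 1 / real m) / 8 \<le> Cminus m n" by (rule Cminus_low_bound[OF elim m])
      have "0 \<le> real n powr (- 1 / real m)" by simp
      then have "0 \<le> Cminus m n" using lo by linarith
      then show ?case using Cminus_up_bound[OF elim m] by simp
    qed
  qed
  show "(\<lambda>n. Cminus m n) \<in> \<Omega>(\<lambda>n. real n powr (- 1 / real m))"
  proof (rule landau_omega.bigI)
    show "(1 / 8 :: real) > 0" by simp
    show "eventually (\<lambda>n. norm (Cminus m n) \<ge> 1 / 8 * norm (real n powr (- 1 / real m))) at_top"
      using ev1
    proof eventually_elim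
      case (elim n)
      have lo: "real n powr (- 1 / real m) / 8 \<le> Cminus m n" by (rule Cminus_low_bound[OF elim m])
      have "0 \<le> real n powr (- 1 / real m)" by simp
      then have "0 \<le> Cminus m n" using lo by linarith
      then show ?case using lo by simp
    qed
  qed
qed

theorem theorem1p2:
  fixes m :: nat
  assumes "m \<ge> 1"
  shows "(\<lambda>n. Cplus m n) \<sim>[at_top] (\<lambda>n. harm m * ln (real n)) \<and>
         (\<lambda>n. Cminus m n) \<in> \<Theta>(\<lambda>n. real n powr (- 1 / real m))"
  using Cplus_asymp[OF assms] Cminus_theta[OF assms] by simp


end
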